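(* Suppose $K\in\mathbb{K}$, $K'=K-2\eta L^K$ and $$0<\eta\le\frac{1}{2\|R+B^T\mathcal{E}(P^K)B\|_{\max}}.$$ Then $$C(K')-C(K^* )\le\Big(1-\frac{2\mu\Lambda_{\min}(R)}{\|\mathbf{X}^{K^*}\|_{\max}}\eta\Big)\big(C(K)-C(K^* )\big).$$
   Context: Let $N_s\ge 1$, $\Omega=\{1,\dots,N_s\}$; tuples $V=(V_1,\dots,V_{N_s})$ of matrices are combined componentwise, $\|V\|_{\max}=\max_i\|V_i\|$ (spectral norm), $\Lambda_{\min}(V)=\min_i\sigma_{\min}(V_i)$. Markovian jump linear system: $x_{t+1}=A_{\omega(t)}x_t+B_{\omega(t)}u_t$, $A_i\in\mathbb{R}^{d\times d}$, $B_i\in\mathbb{R}^{d\times k}$; $\{\omega(t)\}$ is a time-homogeneous Markov chain on $\Omega$ with transition probabilities $p_{ij}$ and initial distribution $\pi$ with $\pi_i>0$; $x_0$ is random, independent of the chain, with $\mathbb{E}[x_0x_0^T]\succ0$. The system is mean-square stabilizable. $Q=(Q_i)\succ0$, $R=(R_i)\succ0$. For $K=(K_i)$, $K_i\in\mathbb{R}^{k\times d}$, $u_t=-K_{\omega(t)}x_t$ and $C(K)=\mathbb{E}[\sum_{t\ge0}x_t^TQ_{\omega(t)}x_t+u_t^TR_{\omega(t)}u_t]$. $\mathbb{K}$ is the set of $K$ making the closed loop $x_{t+1}=\Gamma_{\omega(t)}x_t$, $\Gamma_i=A_i-B_iK_i$, mean-square stable (equivalently $C(K)<\infty$). $K^*$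 is the optimal gain minimizing $C$ over $\mathbb{K}$. $\mathcal{E}_i(V)=\sum_jp_{ij}V_j$; $\mathcal{T}_j(V)=\sum_ip_{ij}\Gamma_iV_i\Gamma_i^T$. For $K\in\mathbb{K}$: $P^K$ solves $P_i^K=Q_i+K_i^TR_iK_i+\Gamma_i^T\mathcal{E}_i(P^K)\Gamma_i$; $L_i^K=(R_i+B_i^T\mathcal{E}_i(P^K)B_i)K_i-B_i^T\mathcal{E}_i(P^K)A_i$; $X_i(0)=\mathbb{E}[x_0x_0^T\mathbf{1}\{\omega(0)=i\}]$, $\mathbf{X}^K=\sum_{t\ge0}\mathcal{T}^t(X(0))$. $\mu=\min_i\pi_i\,\sigma_{\min}(\mathbb{E}[x_0x_0^T])$. *)

theory Defs
  imports "HOL-Analysis.Analysis" "HOL-Probability.Probability"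
begin

definition specnorm :: "real^'n^'m \<Rightarrow> real" where
  "specnorm M = onorm (\<lambda>x. M *v x)"

definition sigma_min :: "real^'n^'n \<Rightarrow> real" where
  "sigma_min M = Inf {norm (M *v x) | x. norm x = 1}"

definition posdef :: "real^'n^'n \<Rightarrow> bool" where
  "posdef M \<longleftrightarrow> transpose M = M \<and> (\<forall>x. x \<noteq> 0 \<longrightarrow> x \<bullet> (M *v x) > 0)"

definition max_norm :: "('m::finite \<Rightarrow> real^'n^'k) \<Rightarrow> real" where
  "max_norm V = Max (range (\<lambda>i. specnorm (V i)))"

definition Lambda_min :: "('m::finite \<Rightarrow> real^'n^'n) \<Rightarrow> real" where
  "Lambda_min V = Min (range (\<lambda>i. sigma_min (V i)))"

definition Gam :: "('m \<Rightarrow> real^'d^'d) \<Rightarrow> ('m \<Rightarrow> real^'k^'d) \<Rightarrow> ('m \<Rightarrow> real^'d^'k) \<Rightarrow> 'm \<Rightarrow> real^'d^'d" where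
  "Gam A B K i = A i - B i ** K i"

text \<open>State transition along a mode path w: \<Phi>_w(t) = \<Gamma>_{w(t-1)} \<dots> \<Gamma>_{w 0}, so x_t = \<Phi>_w(t) x_0.\<close>
fun Phi :: "('m \<Rightarrow> real^'d^'d) \<Rightarrow> (nat \<Rightarrow> 'm) \<Rightarrow> nat \<Rightarrow> real^'d^'d" where
  "Phi G w 0 = mat 1"
| "Phi G w (Suc t) = G (w t) ** Phi G w t"

definition paths :: "nat \<Rightarrow> (nat \<Rightarrow> 'm) set" where
  "paths t = {0..t} \<rightarrow>\<^sub>E UNIV"

definition path_trans :: "('m \<Rightarrow> 'm \<Rightarrow> real) \<Rightarrow> (nat \<Rightarrow> 'm) \<Rightarrow> nat \<Rightarrow> real" where
  "path_trans p w t = (\<Prod>s<t. p (w s) (w (Suc s)))"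

definition stochastic :: "('m::finite \<Rightarrow> 'm \<Rightarrow> real) \<Rightarrow> bool" where
  "stochastic p \<longleftrightarrow> (\<forall>i j. p i j \<ge> 0) \<and> (\<forall>i. (\<Sum>j\<in>UNIV. p i j) = 1)"

text \<open>Mean-square stability of the closed loop x_{t+1} = \<Gamma>_{\<omega>(t)} x_t:
  for every initial mode and every initial state, E |x_t|^2 \<rightarrow> 0.\<close>
definition mss :: "('m::finite \<Rightarrow> 'm \<Rightarrow> real) \<Rightarrow> ('m \<Rightarrow> real^'d^'d) \<Rightarrow> bool" where
  "mss p G \<longleftrightarrow> (\<forall>i0 (x::real^'d).
     (\<lambda>t. \<Sum>w\<in>{w\<in>paths t. w 0 = i0}. path_trans p w t * (norm (Phi G w t *v x))\<^sup>2)
       \<longlonglongrightarrow> 0)"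

definition stabK :: "('m::finite \<Rightarrow> 'm \<Rightarrow> real) \<Rightarrow> ('m \<Rightarrow> real^'d^'d) \<Rightarrow> ('m \<Rightarrow> real^'k^'d)
    \<Rightarrow> ('m \<Rightarrow> real^'d^'k) set" where
  "stabK p A B = {K. mss p (Gam A B K)}"

text \<open>Cost C(K) = E[\<Sum>_t x_t^T Q x_t + u_t^T R u_t] with u_t = -K x_t, where
  x_0 is a random vector on the probability space M, independent of the mode chain
  (initial distribution \<pi>, transitions p).  The expectation over the (finite) mode
  path is written out as a sum over paths weighted by their probabilities; the value is
  an extended real (possibly \<infinity>).\<close>
definition cost :: "'a measure \<Rightarrow> ('a \<Rightarrow> real^'d) \<Rightarrow> ('m::finite \<Rightarrow> real) \<Rightarrow> ('m \<Rightarrow> 'm \<Rightarrow> real)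
    \<Rightarrow> ('m \<Rightarrow> real^'d^'d) \<Rightarrow> ('m \<Rightarrow> real^'k^'d) \<Rightarrow> ('m \<Rightarrow> real^'d^'d) \<Rightarrow> ('m \<Rightarrow> real^'k^'k)
    \<Rightarrow> ('m \<Rightarrow> real^'d^'k) \<Rightarrow> ereal" where
  "cost M x0 \<pi> p A B Q R K =
    (\<Sum>t. ereal (\<Sum>w\<in>paths t. \<pi> (w 0) * path_trans p w t *
        (\<integral>\<omega>. (let x = Phi (Gam A B K) w t *v x0 \<omega>; u = - (K (w t) *v x)
               in x \<bullet> (Q (w t) *v x) + u \<bullet> (R (w t) *v u)) \<partial>M)))"

definition second_moment :: "'a measure \<Rightarrow> ('a \<Rightarrow> real^'d) \<Rightarrow> real^'d^'d" where
  "second_moment M x0 = (\<chi> i j. \<integral>\<omega>. x0 \<omega> $ i * x0 \<omega> $ j \<partial>M)"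

definition Eop :: "('m::finite \<Rightarrow> 'm \<Rightarrow> real) \<Rightarrow> ('m \<Rightarrow> real^'n^'n) \<Rightarrow> 'm \<Rightarrow> real^'n^'n" where
  "Eop p V i = (\<Sum>j\<in>UNIV. p i j *\<^sub>R V j)"

definition Top :: "('m::finite \<Rightarrow> 'm \<Rightarrow> real) \<Rightarrow> ('m \<Rightarrow> real^'d^'d) \<Rightarrow> ('m \<Rightarrow> real^'d^'d) \<Rightarrow> 'm \<Rightarrow> real^'d^'d" where
  "Top p G V j = (\<Sum>i\<in>UNIV. p i j *\<^sub>R (G i ** V i ** transpose (G i)))"

definition PK :: "('m::finite \<Rightarrow> 'm \<Rightarrow> real) \<Rightarrow> ('m \<Rightarrow> real^'d^'d) \<Rightarrow> ('m \<Rightarrow> real^'k^'d)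
    \<Rightarrow> ('m \<Rightarrow> real^'d^'d) \<Rightarrow> ('m \<Rightarrow> real^'k^'k) \<Rightarrow> ('m \<Rightarrow> real^'d^'k) \<Rightarrow> 'm \<Rightarrow> real^'d^'d" where
  "PK p A B Q R K = (THE P. \<forall>i. P i = Q i + transpose (K i) ** R i ** K i
       + transpose (Gam A B K i) ** Eop p P i ** Gam A B K i)"

definition LK :: "('m::finite \<Rightarrow> 'm \<Rightarrow> real) \<Rightarrow> ('m \<Rightarrow> real^'d^'d) \<Rightarrow> ('m \<Rightarrow> real^'k^'d)
    \<Rightarrow> ('m \<Rightarrow> real^'d^'d) \<Rightarrow> ('m \<Rightarrow> real^'k^'k) \<Rightarrow> ('m \<Rightarrow> real^'d^'k) \<Rightarrow> 'm \<Rightarrow> real^'d^'k" where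
  "LK p A B Q R K i = (let P = PK p A B Q R K in
      (R i + transpose (B i) ** Eop p P i ** B i) ** K i - transpose (B i) ** Eop p P i ** A i)"

text \<open>X_i(0) = E[x_0 x_0^T 1{\<omega>(0)=i}] = \<pi>_i E[x_0 x_0^T] (independence).\<close>
definition X0 :: "'a measure \<Rightarrow> ('a \<Rightarrow> real^'d) \<Rightarrow> ('m \<Rightarrow> real) \<Rightarrow> 'm \<Rightarrow> real^'d^'d" where
  "X0 M x0 \<pi> i = \<pi> i *\<^sub>R second_moment M x0"

definition XK :: "'a measure \<Rightarrow> ('a \<Rightarrow> real^'d) \<Rightarrow> ('m::finite \<Rightarrow> real) \<Rightarrow> ('m \<Rightarrow> 'm \<Rightarrow> real)
    \<Rightarrow> ('m \<Rightarrow> real^'d^'d) \<Rightarrow> ('m \<Rightarrow> real^'k^'d) \<Rightarrow> ('m \<Rightarrow> real^'d^'k) \<Rightarrow> 'm \<Rightarrow> real^'d^'d" where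
  "XK M x0 \<pi> p A B K i = (\<Sum>t. ((Top p (Gam A B K) ^^ t) (X0 M x0 \<pi>)) i)"

definition mu :: "'a measure \<Rightarrow> ('a \<Rightarrow> real^'d) \<Rightarrow> ('m::finite \<Rightarrow> real) \<Rightarrow> real" where
  "mu M x0 \<pi> = Min (range \<pi>) * sigma_min (second_moment M x0)"

end

theory Submission
  imports Defs
begin


definition bf :: "real^'n^'n \<Rightarrow> real^'n \<Rightarrow> real^'n \<Rightarrow> real" where
  "bf M u v = u \<bullet> (M *v v)"

lemma bf_entry: "bf M u v = (\<Sum>a\<in>UNIV. \<Sum>b\<in>UNIV. u$a * M$a$b * v$b)"
  by (simp add: bf_def inner_vec_def matrix_vector_mult_def sum_distrib_left mult_ac)

lemma bf_add: "bf (M + N) u v = bf M u v + bf N u v"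
  by (simp add: bf_def matrix_vector_mult_add_rdistrib inner_add_right)
lemma bf_diff: "bf (M - N) u v = bf M u v - bf N u v"
  by (simp add: bf_def matrix_vector_mult_diff_rdistrib inner_diff_right)
lemma bf_scaleR: "bf (c *\<^sub>R M) u v = c * bf M u v"
  by (simp add: bf_entry sum_distrib_left mult_ac)
lemma bf_zero: "bf 0 u v = 0"
  by (simp add: bf_def)
lemma bf_sum: "bf (\<Sum>j\<in>S. f j) u v = (\<Sum>j\<in>S. bf (f j) u v)"
  by (induction S rule: infinite_finite_induct) (auto simp: bf_zero bf_add)
lemma bf_neg: "bf (- M) u v = - bf M u v"
  by (simp add: bf_entry sum_negf)

lemma bf_addL: "bf M (a + b) c = bf M a c + bf M b c"
  by (simp add: bf_def inner_add_left)
lemma bf_addR: "bf M a (b + c) = bf M a b + bf M a c"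
  by (simp add: bf_def matrix_vector_right_distrib inner_add_right)
lemma bf_diffL: "bf M (a - b) c = bf M a c - bf M b c"
  by (simp add: bf_def inner_diff_left)
lemma bf_diffR: "bf M a (b - c) = bf M a b - bf M a c"
  by (simp add: bf_def matrix_vector_mult_diff_distrib inner_diff_right)
lemma bf_scaleL: "bf M (r *\<^sub>R a) c = r * bf M a c"
  by (simp add: bf_def)
lemma bf_scaleRR: "bf M a (r *\<^sub>R c) = r * bf M a c"
  by (simp add: bf_def matrix_vector_mult_scaleR)
lemma bf_negL: "bf M (- a) c = - bf M a c"
  by (simp add: bf_def)
lemma bf_negR: "bf M a (- c) = - bf M a c"
  by (simp add: bf_entry sum_negf)

lemma dot_transpose: "(u::real^'n) \<bullet> (transpose G *v z) = (G *v u) \<bullet> z"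
  by (metis dot_lmul_matrix inner_commute transpose_matrix_vector)

lemma bf_mult3: "bf (transpose G ** V ** G) u v = bf V (G *v u) (G *v v)"
  by (simp only: bf_def matrix_vector_mul_assoc[symmetric] dot_transpose)

lemma bf_mat1: "bf (mat 1) u v = u \<bullet> v"
  by (simp add: bf_def)

lemma bf_transpose: "bf (transpose M) u v = bf M v u"
  by (simp add: bf_def) (metis dot_lmul_matrix inner_commute)

lemma bf_axis: "bf M (axis a 1) (axis b 1) = M$a$b"
proof -
  have "bf M (axis a 1) (axis b 1) = (axis a 1) \<bullet> (column b M)"
    by (simp add: bf_def matrix_vector_mult_def column_def axis_def if_distrib cong: if_cong)
  then show ?thesis by (simp add: inner_axis' column_def)
qed

lemma bf_ext: "(\<And>u v. bf M u v = bf N u v) \<Longrightarrow> M = N"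
  by (metis bf_axis vec_eq_iff)

lemma bf_bound:
  "\<bar>bf M u v\<bar> \<le> onorm (\<lambda>x. M *v x) * norm u * norm v"
proof -
  have "\<bar>bf M u v\<bar> \<le> norm u * norm (M *v v)"
    unfolding bf_def by (rule Cauchy_Schwarz_ineq2)
  also have "\<dots> \<le> norm u * (onorm (\<lambda>x. M *v x) * norm v)"
    by (intro mult_left_mono onorm) auto
  finally show ?thesis by (simp add: mult_ac)
qed

lemma bf_le_specnorm: "bf M u u \<le> specnorm M * (norm u)\<^sup>2"
  using bf_bound[of M u u] unfolding specnorm_def by (simp add: power2_eq_square mult_ac)



definition Lop :: "('m::finite \<Rightarrow> 'm \<Rightarrow> real) \<Rightarrow> ('m \<Rightarrow> real^'d^'d) \<Rightarrow> ('m \<Rightarrow> real^'d^'d) \<Rightarrow> 'm \<Rightarrow> real^'d^'d" where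
  "Lop p G V i = transpose (G i) ** Eop p V i ** G i"

lemma bf_Eop: "bf (Eop p V i) u v = (\<Sum>j\<in>UNIV. p i j * bf (V j) u v)"
  by (simp add: Eop_def bf_sum bf_scaleR)

lemma bf_Lop: "bf (Lop p G V i) u v = (\<Sum>j\<in>UNIV. p i j * bf (V j) (G i *v u) (G i *v v))"
  by (simp add: Lop_def bf_mult3 bf_Eop)

lemma Lop_add: "Lop p G (\<lambda>j. V j + V' j) = (\<lambda>i. Lop p G V i + Lop p G V' i)"
  by (rule ext, rule bf_ext) (simp add: bf_Lop bf_add distrib_left sum.distrib)
lemma Lop_diff: "Lop p G (\<lambda>j. V j - V' j) = (\<lambda>i. Lop p G V i - Lop p G V' i)"
  by (rule ext, rule bf_ext) (simp add: bf_Lop bf_diff right_diff_distrib sum_subtractf)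
lemma Lop_scale: "Lop p G (\<lambda>j. c *\<^sub>R V j) = (\<lambda>i. c *\<^sub>R Lop p G V i)"
  by (rule ext, rule bf_ext) (simp add: bf_Lop bf_scaleR sum_distrib_left mult_ac)
lemma Lop_zero: "Lop p G (\<lambda>j. 0) = (\<lambda>i. 0)"
  by (rule ext, rule bf_ext) (simp add: bf_Lop bf_zero)

lemma Lpow_add: "(Lop p G ^^ n) (\<lambda>j. V j + V' j) = (\<lambda>i. (Lop p G ^^ n) V i + (Lop p G ^^ n) V' i)"
  by (induction n) (simp_all add: Lop_add)
lemma Lpow_diff: "(Lop p G ^^ n) (\<lambda>j. V j - V' j) = (\<lambda>i. (Lop p G ^^ n) V i - (Lop p G ^^ n) V' i)"
  by (induction n) (simp_all add: Lop_diff)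
lemma Lpow_scale: "(Lop p G ^^ n) (\<lambda>j. c *\<^sub>R V j) = (\<lambda>i. c *\<^sub>R (Lop p G ^^ n) V i)"
  by (induction n) (simp_all add: Lop_scale)
lemma Lpow_zero: "(Lop p G ^^ n) (\<lambda>j. 0) = (\<lambda>i. 0)"
  by (induction n) (simp_all add: Lop_zero)

lemma Lop_mono:
  assumes "\<forall>i j. p i j \<ge> 0" "\<And>j y. bf (V j) y y \<le> bf (V' j) y y"
  shows "bf (Lop p G V i) x x \<le> bf (Lop p G V' i) x x"
  unfolding bf_Lop by (intro sum_mono mult_left_mono) (use assms in auto)

lemma Lpow_mono:
  assumes "\<forall>i j. p i j \<ge> 0" "\<And>j y. bf (V j) y y \<le> bf (V' j) y y"
  shows "bf ((Lop p G ^^ n) V i) x x \<le> bf ((Lop p G ^^ n) V' i) x x"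
  using assms(2) by (induction n arbitrary: i x) (auto intro: Lop_mono[OF assms(1)])

lemma Lpow_psd:
  assumes "\<forall>i j. p i j \<ge> 0" "\<And>j y. 0 \<le> bf (V j) y y"
  shows "0 \<le> bf ((Lop p G ^^ n) V i) x x"
  using Lpow_mono[OF assms(1), of "\<lambda>j. 0" V] assms(2) by (simp add: Lpow_zero bf_zero)

lemma finite_paths: "finite (paths t :: (nat \<Rightarrow> 'm::finite) set)"
  unfolding paths_def by (rule finite_PiE) auto

lemma sum_paths_Suc:
  "(\<Sum>w\<in>paths (Suc t). f w) = (\<Sum>w\<in>paths t. \<Sum>j\<in>(UNIV::'m::finite set). f (w(Suc t := j)))"
proof -
  have e: "paths (Suc t) = (\<lambda>(y, g). g(Suc t := y)) ` ((UNIV::'m set) \<times> paths t)"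
    unfolding paths_def
    by (metis PiE_insert_eq atLeast0_atMost_Suc)
  have inj: "inj_on (\<lambda>(y, g). g(Suc t := y)) ((UNIV::'m set) \<times> paths t)"
    unfolding paths_def by (rule inj_combinator) auto
  have "(\<Sum>w\<in>paths (Suc t). f w) = (\<Sum>(y,g)\<in>(UNIV::'m set) \<times> paths t. f (g(Suc t := y)))"
    unfolding e by (subst sum.reindex[OF inj]) (simp add: case_prod_beta')
  also have "\<dots> = (\<Sum>y\<in>(UNIV::'m set). \<Sum>g\<in>paths t. f (g(Suc t := y)))"
    by (rule sum.cartesian_product[symmetric])
  also have "\<dots> = (\<Sum>g\<in>paths t. \<Sum>y\<in>(UNIV::'m set). f (g(Suc t := y)))"
    by (rule sum.swap)
  finally show ?thesis .
qed

lemma sum_paths_0: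
  "(\<Sum>w\<in>paths 0. f w) = (\<Sum>j\<in>(UNIV::'m::finite set). f ((\<lambda>_. undefined)(0 := j)))"
proof -
  have e: "paths 0 = (\<lambda>(y, g). g(0 := y)) ` ((UNIV::'m set) \<times> Pi\<^sub>E {} (\<lambda>_. UNIV))"
    unfolding paths_def by (metis PiE_insert_eq atLeastAtMost_singleton)
  have inj: "inj_on (\<lambda>(y, g). g(0 := y)) ((UNIV::'m set) \<times> Pi\<^sub>E {} (\<lambda>_. UNIV))"
    by (rule inj_combinator) auto
  have "(\<Sum>w\<in>paths 0. f w) = (\<Sum>(y,g)\<in>(UNIV::'m set) \<times> Pi\<^sub>E {} (\<lambda>_. UNIV). f (g(0 := y)))"
    unfolding e by (subst sum.reindex[OF inj]) (simp add: case_prod_beta')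
  also have "\<dots> = (\<Sum>y\<in>(UNIV::'m set). \<Sum>g\<in>Pi\<^sub>E {} (\<lambda>_. UNIV). f (g(0 := y)))"
    by (rule sum.cartesian_product[symmetric])
  finally show ?thesis by (simp add: fun_upd_def)
qed

lemma path_trans_upd:
  "path_trans p (w(Suc t := j)) (Suc t) = path_trans p w t * p (w t) j"
proof -
  have "(\<Prod>s<t. p ((w(Suc t := j)) s) ((w(Suc t := j)) (Suc s))) = (\<Prod>s<t. p (w s) (w (Suc s)))"
    by (rule prod.cong) auto
  then show ?thesis by (simp add: path_trans_def)
qed

lemma Phi_upd: "t \<le> n \<Longrightarrow> Phi G (w(n := j)) t = Phi G w t"
  by (induction t) auto

lemma path_trans_nonneg: "\<forall>i j. p i j \<ge> (0::real) \<Longrightarrow> path_trans p w t \<ge> 0"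
  unfolding path_trans_def by (auto intro: prod_nonneg)

lemma path_rep:
  "(\<Sum>w\<in>paths t. c (w 0) * path_trans p w t * bf (V (w t)) (Phi G w t *v u) (Phi G w t *v v))
   = (\<Sum>i\<in>(UNIV::'m::finite set). c i * bf ((Lop p G ^^ t) V i) u v)"
proof (induction t arbitrary: V)
  case 0
  show ?case by (simp add: sum_paths_0 path_trans_def)
next
  case (Suc t)
  have "(\<Sum>w\<in>paths (Suc t). c (w 0) * path_trans p w (Suc t) * bf (V (w (Suc t))) (Phi G w (Suc t) *v u) (Phi G w (Suc t) *v v))
      = (\<Sum>w\<in>paths t. \<Sum>j\<in>UNIV. c (w 0) * (path_trans p w t * p (w t) j) *
          bf (V j) (G (w t) *v (Phi G w t *v u)) (G (w t) *v (Phi G w t *v v)))"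
    by (simp add: sum_paths_Suc path_trans_upd Phi_upd matrix_vector_mul_assoc)
  also have "\<dots> = (\<Sum>w\<in>paths t. c (w 0) * path_trans p w t * bf (Lop p G V (w t)) (Phi G w t *v u) (Phi G w t *v v))"
    by (simp add: bf_Lop sum_distrib_left mult_ac)
  also have "\<dots> = (\<Sum>i\<in>UNIV. c i * bf ((Lop p G ^^ t) (Lop p G V) i) u v)"
    by (rule Suc.IH)
  finally show ?case by (simp add: funpow_Suc_right del: funpow.simps)
qed



lemma mss_sum_eq:
  fixes p :: "'m::finite \<Rightarrow> 'm \<Rightarrow> real" and G :: "'m \<Rightarrow> real^'d^'d"
  shows "(\<Sum>w\<in>{w\<in>paths t. w 0 = i0}. path_trans p w t * (norm (Phi G w t *v x))\<^sup>2)
   = bf ((Lop p G ^^ t) (\<lambda>_. mat 1) i0) (x::real^'d) x"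
proof -
  have "(\<Sum>w\<in>{w\<in>paths t. w 0 = i0}. path_trans p w t * (norm (Phi G w t *v x))\<^sup>2)
     = (\<Sum>w\<in>paths t. (\<lambda>i. if i = i0 then 1 else 0) (w 0) * path_trans p w t *
          bf ((\<lambda>_. mat 1) (w t)) (Phi G w t *v x) (Phi G w t *v x))"
    by (simp add: sum.inter_filter[OF finite_paths] bf_mat1 power2_norm_eq_inner if_distrib if_distribR cong: if_cong)
  also have "\<dots> = (\<Sum>i\<in>(UNIV::'m set). (\<lambda>i. if i = i0 then 1 else 0) i * bf ((Lop p G ^^ t) (\<lambda>_. mat 1) i) x x)"
    by (rule path_rep)
  also have "\<dots> = bf ((Lop p G ^^ t) (\<lambda>_. mat 1) i0) x x"
    by (simp add: if_distrib if_distribR cong: if_cong)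
  finally show ?thesis .
qed

lemma mss_iff:
  fixes p :: "'m::finite \<Rightarrow> 'm \<Rightarrow> real" and G :: "'m \<Rightarrow> real^'d^'d"
  shows  "mss p G \<longleftrightarrow> (\<forall>i (x::real^'d). (\<lambda>t. bf ((Lop p G ^^ t) (\<lambda>_. mat 1) i) x x) \<longlonglongrightarrow> 0)"
  unfolding mss_def mss_sum_eq ..

lemma Lpow_tendsto0:
  fixes p :: "'m::finite \<Rightarrow> 'm \<Rightarrow> real" and G :: "'m \<Rightarrow> real^'d^'d"
  assumes mss: "mss p G" and pn: "\<forall>i j. p i j \<ge> 0"
  shows "(\<lambda>t. bf ((Lop p G ^^ t) V i) u v) \<longlonglongrightarrow> 0"
proof -
  define C where "C = (\<Sum>j\<in>UNIV. onorm (\<lambda>x. V j *v x))"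
  have onn: "0 \<le> onorm (\<lambda>x. V j *v x)" for j by (rule onorm_pos_le) simp
  have Cge: "onorm (\<lambda>x. V j *v x) \<le> C" for j
    unfolding C_def by (rule member_le_sum) (auto intro: onn)
  have C0: "0 \<le> C" unfolding C_def by (rule sum_nonneg) (use onn in auto)
  define c where "c = (\<lambda>k::'m. if k = i then (1::real) else 0)"
  have rep: "bf ((Lop p G ^^ t) X i) a b = (\<Sum>w\<in>paths t. c (w 0) * path_trans p w t * bf (X (w t)) (Phi G w t *v a) (Phi G w t *v b))"
    for t X a b
    by (subst path_rep) (simp add: c_def if_distrib if_distribR cong: if_cong)
  have cn: "0 \<le> c k" for k by (simp add: c_def)
  have bnd: "\<bar>bf M a b\<bar> \<le> C / 2 * (bf (mat 1) a a + bf (mat 1) b b)"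
    if "onorm (\<lambda>x. M *v x) \<le> C" for M :: "real^'d^'d" and a b
  proof -
    have "\<bar>bf M a b\<bar> \<le> onorm (\<lambda>x. M *v x) * norm a * norm b" by (rule bf_bound)
    also have "\<dots> \<le> C * (norm a * norm b)"
      using that by (simp add: mult.assoc mult_right_mono)
    also have "norm a * norm b \<le> ((norm a)\<^sup>2 + (norm b)\<^sup>2) / 2"
      using sum_squares_bound[of "norm a" "norm b"] by simp
    then have "C * (norm a * norm b) \<le> C * (((norm a)\<^sup>2 + (norm b)\<^sup>2) / 2)"
      using C0 by (rule mult_left_mono)
    finally show ?thesis by (simp add: bf_mat1 power2_norm_eq_inner)
  qed
  have le: "norm (bf ((Lop p G ^^ t) V i) u v) \<le>
      norm (bf ((Lop p G ^^ t) (\<lambda>_. mat 1) i) u u + bf ((Lop p G ^^ t) (\<lambda>_. mat 1) i) v v) * (C/2)" for t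
  proof -
    have "norm (bf ((Lop p G ^^ t) V i) u v) = \<bar>\<Sum>w\<in>paths t. c (w 0) * path_trans p w t * bf (V (w t)) (Phi G w t *v u) (Phi G w t *v v)\<bar>"
      by (simp add: rep)
    also have "\<dots> \<le> (\<Sum>w\<in>paths t. \<bar>c (w 0) * path_trans p w t * bf (V (w t)) (Phi G w t *v u) (Phi G w t *v v)\<bar>)"
      by (rule sum_abs)
    also have "\<dots> \<le> (\<Sum>w\<in>paths t. c (w 0) * path_trans p w t * (C / 2 * (bf (mat 1) (Phi G w t *v u) (Phi G w t *v u) + bf (mat 1) (Phi G w t *v v) (Phi G w t *v v))))"
    proof (rule sum_mono)
      fix w
      have nn: "0 \<le> c (w 0) * path_trans p w t" using cn path_trans_nonneg[OF pn] by simp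
      have "\<bar>(c (w 0) * path_trans p w t) * bf (V (w t)) (Phi G w t *v u) (Phi G w t *v v)\<bar>
          = (c (w 0) * path_trans p w t) * \<bar>bf (V (w t)) (Phi G w t *v u) (Phi G w t *v v)\<bar>"
        by (simp only: abs_mult[of "c (w 0) * path_trans p w t"] abs_of_nonneg[OF nn])
      also have "\<dots> \<le> (c (w 0) * path_trans p w t) * (C / 2 * (bf (mat 1) (Phi G w t *v u) (Phi G w t *v u) + bf (mat 1) (Phi G w t *v v) (Phi G w t *v v)))"
        by (rule mult_left_mono[OF bnd[OF Cge] nn])
      finally show "\<bar>c (w 0) * path_trans p w t * bf (V (w t)) (Phi G w t *v u) (Phi G w t *v v)\<bar> \<le> c (w 0) * path_trans p w t * (C / 2 * (bf (mat 1) (Phi G w t *v u) (Phi G w t *v u) + bf (mat 1) (Phi G w t *v v) (Phi G w t *v v)))" .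
    qed
    also have "\<dots> = C / 2 * ((\<Sum>w\<in>paths t. c (w 0) * path_trans p w t * bf ((\<lambda>_. mat 1) (w t)) (Phi G w t *v u) (Phi G w t *v u))
         + (\<Sum>w\<in>paths t. c (w 0) * path_trans p w t * bf ((\<lambda>_. mat 1) (w t)) (Phi G w t *v v) (Phi G w t *v v)))"
    proof -
      have e: "\<And>(x::real) y z. x * (C / 2 * (y + z)) = C / 2 * (x * y) + C / 2 * (x * z)"
        by (simp add: algebra_simps)
      show ?thesis by (simp only: e sum.distrib sum_distrib_left[symmetric]) (simp only: distrib_left)
    qed
    also have "\<dots> = C / 2 * (bf ((Lop p G ^^ t) (\<lambda>_. mat 1) i) u u + bf ((Lop p G ^^ t) (\<lambda>_. mat 1) i) v v)"
      by (simp only: rep)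
    also have "\<dots> \<le> norm (bf ((Lop p G ^^ t) (\<lambda>_. mat 1) i) u u + bf ((Lop p G ^^ t) (\<lambda>_. mat 1) i) v v) * (C/2)"
    proof -
      let ?X = "bf ((Lop p G ^^ t) (\<lambda>_. mat 1) i) u u + bf ((Lop p G ^^ t) (\<lambda>_. mat 1) i) v v"
      have "C / 2 * ?X = ?X * (C / 2)" by (rule mult.commute)
      also have "\<dots> \<le> \<bar>?X\<bar> * (C / 2)" by (rule mult_right_mono) (use C0 in auto)
      finally show ?thesis by simp
    qed
    finally show ?thesis .
  qed
  have "(\<lambda>t. bf ((Lop p G ^^ t) (\<lambda>_. mat 1) i) u u + bf ((Lop p G ^^ t) (\<lambda>_. mat 1) i) v v) \<longlonglongrightarrow> 0 + 0"
    using mss unfolding mss_iff by (intro tendsto_add) auto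
  then have lim: "(\<lambda>t. bf ((Lop p G ^^ t) (\<lambda>_. mat 1) i) u u + bf ((Lop p G ^^ t) (\<lambda>_. mat 1) i) v v) \<longlonglongrightarrow> 0"
    by simp
  show ?thesis
    by (rule tendsto_0_le[OF lim, where K="C/2"]) (rule always_eventually, rule allI, rule le)
qed

lemma lyap_unique0:
  fixes p :: "'m::finite \<Rightarrow> 'm \<Rightarrow> real" and G :: "'m \<Rightarrow> real^'d^'d"
  assumes mss: "mss p G" and pn: "\<forall>i j. p i j \<ge> 0" and D: "\<forall>i. D i = Lop p G D i"
  shows "D = (\<lambda>i. 0)"
proof -
  have Dfix: "Lop p G D = D" using D by auto
  have pw: "(Lop p G ^^ t) D = D" for t
    by (induction t) (simp_all add: Dfix)
  have "bf (D i) u v = 0" for i u v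
  proof -
    have "(\<lambda>t. bf (D i) u v) \<longlonglongrightarrow> 0"
      using Lpow_tendsto0[OF mss pn, of D i u v] by (simp add: pw)
    then show ?thesis by (simp add: LIMSEQ_const_iff)
  qed
  then show ?thesis by (intro ext bf_ext) (simp add: bf_zero)
qed

lemma lyap_exists:
  fixes p :: "'m::finite \<Rightarrow> 'm \<Rightarrow> real" and G :: "'m \<Rightarrow> real^'d^'d"
  assumes mss: "mss p G" and pn: "\<forall>i j. p i j \<ge> 0"
  shows "\<exists>P. \<forall>i. P i = W i + Lop p G P i"
proof -
  define F where "F = (\<lambda>v::real^'d^'d^'m. v - (\<chi> i. Lop p G (\<lambda>j. v$j) i))"
  have lin: "linear F"
  proof (rule linearI)
    fix x y :: "real^'d^'d^'m"
    have e: "($) (x + y) = (\<lambda>j. x$j + y$j)" by (rule ext) simp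
    show "F (x + y) = F x + F y"
      unfolding F_def by (simp add: e Lop_add vec_eq_iff)
  next
    fix c :: real and x :: "real^'d^'d^'m"
    have e: "($) (c *\<^sub>R x) = (\<lambda>j. c *\<^sub>R x$j)" by (rule ext) simp
    show "F (c *\<^sub>R x) = c *\<^sub>R F x"
      unfolding F_def e by (simp add: Lop_scale vec_eq_iff algebra_simps)
  qed
  have "inj F"
  proof (rule injI)
    fix x y assume "F x = F y"
    then have "F (x - y) = 0" using linear_diff[OF lin] by simp
    then have "\<forall>i. (($) (x - y)) i = Lop p G (($) (x - y)) i"
      unfolding F_def by (simp add: vec_eq_iff)
    from lyap_unique0[OF mss pn this] have "($) (x - y) = (\<lambda>i. 0)" .
    then have "x - y = 0" by (simp add: vec_eq_iff fun_eq_iff)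
    then show "x = y" by simp
  qed
  from eucl.linear_inj_imp_surj[OF lin this] obtain v where "F v = (\<chi> i. W i)"
    by (metis surjD)
  then have "\<forall>i. v$i - Lop p G (\<lambda>j. v$j) i = W i"
    unfolding F_def by (simp add: vec_eq_iff)
  then have "\<forall>i. v$i = W i + Lop p G (($) v) i"
    by (metis diff_add_cancel add.commute)
  then show ?thesis by blast
qed

lemma lyap_ex1:
  fixes p :: "'m::finite \<Rightarrow> 'm \<Rightarrow> real" and G :: "'m \<Rightarrow> real^'d^'d"
  assumes mss: "mss p G" and pn: "\<forall>i j. p i j \<ge> 0"
  shows "\<exists>!P. \<forall>i. P i = W i + Lop p G P i"
proof -
  obtain P where P: "\<forall>i. P i = W i + Lop p G P i" using lyap_exists[OF mss pn] by blast
  have "P' = P" if P': "\<forall>i. P' i = W i + Lop p G P' i" for P'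
  proof -
    have "\<forall>i. (\<lambda>j. P' j - P j) i = Lop p G (\<lambda>j. P' j - P j) i"
    proof
      fix i
      have a: "P' i = W i + Lop p G P' i" using P' by blast
      have b: "P i = W i + Lop p G P i" using P by blast
      have "P' i - P i = Lop p G P' i - Lop p G P i"
        by (subst a, subst b) simp
      then show "(\<lambda>j. P' j - P j) i = Lop p G (\<lambda>j. P' j - P j) i"
        by (simp add: Lop_diff)
    qed
    from lyap_unique0[OF mss pn this] show ?thesis by (simp add: fun_eq_iff)
  qed
  with P show ?thesis by blast
qed

lemma Lpow_partial:
  assumes P: "\<forall>i. P i = W i + Lop p G P i"
  shows "(\<Sum>t<n. (Lop p G ^^ t) W i) = P i - (Lop p G ^^ n) P i"
proof (induction n arbitrary: i)
  case 0 then show ?case by simp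
next
  case (Suc n)
  have W: "W = (\<lambda>j. P j - Lop p G P j)" using P by (auto simp: fun_eq_iff algebra_simps)
  have "(Lop p G ^^ n) W i = (Lop p G ^^ n) P i - (Lop p G ^^ Suc n) P i"
    unfolding W Lpow_diff by (simp add: funpow_Suc_right del: funpow.simps)
  then show ?case using Suc by simp
qed

lemma Lpow_sums_bf:
  fixes p :: "'m::finite \<Rightarrow> 'm \<Rightarrow> real" and G :: "'m \<Rightarrow> real^'d^'d"
  assumes mss: "mss p G" and pn: "\<forall>i j. p i j \<ge> 0" and P: "\<forall>i. P i = W i + Lop p G P i"
  shows "(\<lambda>n. bf (\<Sum>t<n. (Lop p G ^^ t) W i) u v) \<longlonglongrightarrow> bf (P i) u v"
proof -
  have "(\<lambda>n. bf (P i) u v - bf ((Lop p G ^^ n) P i) u v) \<longlonglongrightarrow> bf (P i) u v - 0"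
    by (intro tendsto_diff tendsto_const Lpow_tendsto0[OF mss pn])
  then show ?thesis by (simp add: Lpow_partial[OF P] bf_diff)
qed

lemma lyap_psd:
  fixes p :: "'m::finite \<Rightarrow> 'm \<Rightarrow> real" and G :: "'m \<Rightarrow> real^'d^'d"
  assumes mss: "mss p G" and pn: "\<forall>i j. p i j \<ge> 0" and P: "\<forall>i. P i = W i + Lop p G P i"
    and W: "\<And>j y. 0 \<le> bf (W j) y y"
  shows "0 \<le> bf (P i) x x"
proof (rule LIMSEQ_le_const[OF Lpow_sums_bf[OF mss pn P]])
  show "\<exists>N. \<forall>n\<ge>N. 0 \<le> bf (\<Sum>t<n. (Lop p G ^^ t) W i) x x"
    by (auto simp: bf_sum intro!: sum_nonneg Lpow_psd[OF pn] W)
qed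

lemma transpose_add': "transpose (X + Y) = transpose X + transpose (Y::real^'n^'n)"
  by (rule bf_ext) (simp add: bf_transpose bf_add)

lemma transpose_Lop: "transpose (Lop p G P i) = Lop p G (\<lambda>j. transpose (P j)) i"
  by (rule bf_ext) (simp add: bf_transpose bf_Lop)

lemma lyap_sym:
  fixes p :: "'m::finite \<Rightarrow> 'm \<Rightarrow> real" and G :: "'m \<Rightarrow> real^'d^'d"
  assumes mss: "mss p G" and pn: "\<forall>i j. p i j \<ge> 0" and P: "\<forall>i. P i = W i + Lop p G P i"
    and W: "\<And>j. transpose (W j) = W j"
  shows "transpose (P i) = P i"
proof -
  have P': "\<forall>i. (\<lambda>j. transpose (P j)) i = W i + Lop p G (\<lambda>j. transpose (P j)) i"
  proof
    fix i
    have "transpose (P i) = transpose (W i + Lop p G P i)" using spec[OF P, of i] by (rule arg_cong)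
    then show "(\<lambda>j. transpose (P j)) i = W i + Lop p G (\<lambda>j. transpose (P j)) i"
      by (simp add: transpose_add' W transpose_Lop)
  qed
  obtain X where uq: "\<And>Y. \<forall>i. Y i = W i + Lop p G Y i \<Longrightarrow> Y = X"
    using lyap_ex1[OF mss pn, of W] by blast
  have e1: "(\<lambda>j. transpose (P j)) = X" by (rule uq[OF P'])
  have e2: "P = X" by (rule uq[OF P])
  have e: "(\<lambda>j. transpose (P j)) = P" by (rule trans[OF e1 e2[symmetric]])
  show ?thesis using fun_cong[OF e, of i] by simp
qed



definition fr :: "real^'n^'n \<Rightarrow> real^'n^'n \<Rightarrow> real" where
  "fr X M = (\<Sum>a\<in>UNIV. \<Sum>b\<in>UNIV. X$a$b * M$a$b)"

lemma fr_bf: "fr S M = (\<Sum>a\<in>UNIV. \<Sum>b\<in>UNIV. S$a$b * bf M (axis a 1) (axis b 1))"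
  by (simp add: fr_def bf_axis)
lemma fr_add: "fr S (M + N) = fr S M + fr S N"
  by (simp add: fr_def algebra_simps sum.distrib)
lemma fr_diff: "fr S (M - N) = fr S M - fr S N"
  by (simp add: fr_def algebra_simps sum_subtractf)
lemma fr_scaleR: "fr S (c *\<^sub>R M) = c * fr S M"
  by (simp add: fr_def sum_distrib_left mult_ac)
lemma fr_scaleL: "fr (c *\<^sub>R S) M = c * fr S M"
  by (simp add: fr_def sum_distrib_left mult_ac)
lemma fr_zero: "fr S 0 = 0"
  by (simp add: fr_def)
lemma fr_sum: "fr S (\<Sum>j\<in>J. f j) = (\<Sum>j\<in>J. fr S (f j))"
  by (induction J rule: infinite_finite_induct) (auto simp: fr_zero fr_add)

lemma comp_integrable:
  fixes x0 :: "'a \<Rightarrow> real^'d"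
  assumes meas: "x0 \<in> borel_measurable M" and int: "integrable M (\<lambda>\<omega>. (norm (x0 \<omega>))\<^sup>2)"
  shows "integrable M (\<lambda>\<omega>. x0 \<omega> $ a * x0 \<omega> $ b)"
proof (rule Bochner_Integration.integrable_bound[OF int])
  show "(\<lambda>\<omega>. x0 \<omega> $ a * x0 \<omega> $ b) \<in> borel_measurable M"
  proof -
    have "continuous_on UNIV (\<lambda>x::real^'d. x $ c)" for c by (intro continuous_intros)
    then have "(\<lambda>x::real^'d. x $ c) \<in> borel_measurable borel" for c
      by (rule borel_measurable_continuous_onI)
    then have "(\<lambda>\<omega>. x0 \<omega> $ c) \<in> borel_measurable M" for c
      using measurable_compose[OF meas] by blast
    then show ?thesis by measurable
  qed
  show "AE \<omega> in M. norm (x0 \<omega> $ a * x0 \<omega> $ b) \<le> norm ((norm (x0 \<omega>))\<^sup>2)"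
  proof (rule AE_I2)
    fix \<omega>
    have "\<bar>x0 \<omega> $ a\<bar> * \<bar>x0 \<omega> $ b\<bar> \<le> norm (x0 \<omega>) * norm (x0 \<omega>)"
      by (intro mult_mono component_le_norm_cart) auto
    then show "norm (x0 \<omega> $ a * x0 \<omega> $ b) \<le> norm ((norm (x0 \<omega>))\<^sup>2)"
      by (simp add: abs_mult power2_eq_square)
  qed
qed

lemma int_bf:
  fixes x0 :: "'a \<Rightarrow> real^'d"
  assumes meas: "x0 \<in> borel_measurable M" and int: "integrable M (\<lambda>\<omega>. (norm (x0 \<omega>))\<^sup>2)"
  shows "integrable M (\<lambda>\<omega>. bf N (x0 \<omega>) (x0 \<omega>))"
    and "(\<integral>\<omega>. bf N (x0 \<omega>) (x0 \<omega>) \<partial>M) = fr (second_moment M x0) N"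
proof -
  have e: "bf N (x0 \<omega>) (x0 \<omega>) = (\<Sum>a\<in>UNIV. \<Sum>b\<in>UNIV. N$a$b * (x0 \<omega> $ a * x0 \<omega> $ b))" for \<omega>
    by (simp add: bf_entry mult_ac)
  show "integrable M (\<lambda>\<omega>. bf N (x0 \<omega>) (x0 \<omega>))"
    unfolding e by (auto intro!: Bochner_Integration.integrable_sum Bochner_Integration.integrable_mult_right comp_integrable[OF meas int])
  have "(\<integral>\<omega>. bf N (x0 \<omega>) (x0 \<omega>) \<partial>M) = (\<Sum>a\<in>UNIV. \<Sum>b\<in>UNIV. N$a$b * (\<integral>\<omega>. x0 \<omega> $ a * x0 \<omega> $ b \<partial>M))"
    unfolding e
    by (simp add: integral_sum integrable_sum integrable_mult_right comp_integrable[OF meas int])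
  then show "(\<integral>\<omega>. bf N (x0 \<omega>) (x0 \<omega>) \<partial>M) = fr (second_moment M x0) N"
    by (simp add: fr_def second_moment_def mult_ac)
qed

lemma fr_mono:
  fixes x0 :: "'a \<Rightarrow> real^'d"
  assumes meas: "x0 \<in> borel_measurable M" and int: "integrable M (\<lambda>\<omega>. (norm (x0 \<omega>))\<^sup>2)"
    and le: "\<And>x. bf N x x \<le> bf N' x x"
  shows "fr (second_moment M x0) N \<le> fr (second_moment M x0) N'"
  unfolding int_bf(2)[OF meas int, symmetric]
  by (intro integral_mono int_bf(1)[OF meas int] le)

lemma mv_neg: "(A::real^'n^'m) *v (- x) = - (A *v x)"
  by (simp add: matrix_vector_mult_def vec_eq_iff sum_negf)

lemma cost_integrand:
  "(let x = X; u = - (Kj *v x) in x \<bullet> (Qj *v x) + u \<bullet> (Rj *v u)) = bf (Qj + transpose Kj ** Rj ** Kj) X X"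
  by (simp add: Let_def bf_add bf_mult3 bf_negL bf_negR) (simp add: bf_def mv_neg)

definition Wf :: "('m \<Rightarrow> real^'d^'d) \<Rightarrow> ('m \<Rightarrow> real^'k^'k) \<Rightarrow> ('m \<Rightarrow> real^'d^'k) \<Rightarrow> 'm \<Rightarrow> real^'d^'d" where
  "Wf Q R K j = Q j + transpose (K j) ** R j ** K j"

lemma cost_term:
  fixes x0 :: "'a \<Rightarrow> real^'d" and p :: "'m::finite \<Rightarrow> 'm \<Rightarrow> real"
  assumes meas: "x0 \<in> borel_measurable M" and int: "integrable M (\<lambda>\<omega>. (norm (x0 \<omega>))\<^sup>2)"
  shows "(\<Sum>w\<in>paths t. \<pi> (w 0) * path_trans p w t *
        (\<integral>\<omega>. (let x = Phi (Gam A B K) w t *v x0 \<omega>; u = - (K (w t) *v x)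
               in x \<bullet> (Q (w t) *v x) + u \<bullet> (R (w t) *v u)) \<partial>M))
    = (\<Sum>i\<in>UNIV. \<pi> i * fr (second_moment M x0) ((Lop p (Gam A B K) ^^ t) (Wf Q R K) i))"
proof -
  let ?G = "Gam A B K"
  have i1: "integrable M (\<lambda>\<omega>. bf (Wf Q R K (w t)) (Phi ?G w t *v x0 \<omega>) (Phi ?G w t *v x0 \<omega>))" for w
    using int_bf(1)[OF meas int, of "transpose (Phi ?G w t) ** Wf Q R K (w t) ** Phi ?G w t"]
    by (simp add: bf_mult3)
  have "(\<Sum>w\<in>paths t. \<pi> (w 0) * path_trans p w t *
        (\<integral>\<omega>. (let x = Phi ?G w t *v x0 \<omega>; u = - (K (w t) *v x)
               in x \<bullet> (Q (w t) *v x) + u \<bullet> (R (w t) *v u)) \<partial>M))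
     = (\<Sum>w\<in>paths t. \<pi> (w 0) * path_trans p w t *
        (\<integral>\<omega>. bf (Wf Q R K (w t)) (Phi ?G w t *v x0 \<omega>) (Phi ?G w t *v x0 \<omega>) \<partial>M))"
    by (simp only: cost_integrand Wf_def)
  also have "\<dots> = (\<integral>\<omega>. (\<Sum>w\<in>paths t. \<pi> (w 0) * path_trans p w t *
        bf (Wf Q R K (w t)) (Phi ?G w t *v x0 \<omega>) (Phi ?G w t *v x0 \<omega>)) \<partial>M)"
    by (simp add: integral_sum i1 integrable_mult_right)
  also have "\<dots> = (\<integral>\<omega>. (\<Sum>i\<in>UNIV. \<pi> i * bf ((Lop p ?G ^^ t) (Wf Q R K) i) (x0 \<omega>) (x0 \<omega>)) \<partial>M)"
    by (simp only: path_rep)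
  also have "\<dots> = (\<Sum>i\<in>UNIV. \<pi> i * fr (second_moment M x0) ((Lop p ?G ^^ t) (Wf Q R K) i))"
    by (simp add: integral_sum int_bf[OF meas int] integrable_mult_right)
  finally show ?thesis .
qed

definition IPX :: "('a \<Rightarrow> real^'d) \<Rightarrow> 'a measure \<Rightarrow> ('m::finite \<Rightarrow> real) \<Rightarrow> ('m \<Rightarrow> real^'d^'d) \<Rightarrow> real" where
  "IPX x0 M \<pi> V = (\<Sum>i\<in>UNIV. \<pi> i * fr (second_moment M x0) (V i))"

lemma IPX_lim:
  fixes p :: "'m::finite \<Rightarrow> 'm \<Rightarrow> real" and G :: "'m \<Rightarrow> real^'d^'d"
  assumes mss: "mss p G" and pn: "\<forall>i j. p i j \<ge> 0" and P: "\<forall>i. P i = W i + Lop p G P i"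
  shows "(\<lambda>t. IPX x0 M \<pi> ((Lop p G ^^ t) W)) sums IPX x0 M \<pi> P"
proof -
  let ?S = "second_moment M x0"
  have ps: "(\<Sum>t<n. IPX x0 M \<pi> ((Lop p G ^^ t) W)) =
      (\<Sum>i\<in>UNIV. \<pi> i * (\<Sum>a\<in>UNIV. \<Sum>b\<in>UNIV. ?S$a$b * bf (\<Sum>t<n. (Lop p G ^^ t) W i) (axis a 1) (axis b 1)))" for n
  proof -
    have "(\<Sum>t<n. IPX x0 M \<pi> ((Lop p G ^^ t) W)) = (\<Sum>i\<in>UNIV. \<pi> i * fr ?S (\<Sum>t<n. (Lop p G ^^ t) W i))"
      unfolding IPX_def fr_sum by (simp add: sum_distrib_left) (rule sum.swap)
    then show ?thesis by (simp only: fr_bf)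
  qed
  have "(\<lambda>n. \<Sum>i\<in>UNIV. \<pi> i * (\<Sum>a\<in>UNIV. \<Sum>b\<in>UNIV. ?S$a$b * bf (\<Sum>t<n. (Lop p G ^^ t) W i) (axis a 1) (axis b 1)))
      \<longlonglongrightarrow> (\<Sum>i\<in>UNIV. \<pi> i * (\<Sum>a\<in>UNIV. \<Sum>b\<in>UNIV. ?S$a$b * bf (P i) (axis a 1) (axis b 1)))"
    by (intro tendsto_sum tendsto_mult_left Lpow_sums_bf[OF mss pn P])
  then show ?thesis
    unfolding sums_def ps by (simp only: IPX_def fr_bf)
qed

lemma cost_eq:
  fixes x0 :: "'a \<Rightarrow> real^'d" and p :: "'m::finite \<Rightarrow> 'm \<Rightarrow> real"
  assumes meas: "x0 \<in> borel_measurable M" and int: "integrable M (\<lambda>\<omega>. (norm (x0 \<omega>))\<^sup>2)"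
    and mss: "mss p (Gam A B K)" and pn: "\<forall>i j. p i j \<ge> 0"
    and P: "\<forall>i. P i = Wf Q R K i + Lop p (Gam A B K) P i"
  shows "cost M x0 \<pi> p A B Q R K = ereal (IPX x0 M \<pi> P)"
proof -
  have "(\<lambda>t. ereal (IPX x0 M \<pi> ((Lop p (Gam A B K) ^^ t) (Wf Q R K)))) sums ereal (IPX x0 M \<pi> P)"
    unfolding sums_ereal by (rule IPX_lim[OF mss pn P])
  then have "(\<Sum>t. ereal (IPX x0 M \<pi> ((Lop p (Gam A B K) ^^ t) (Wf Q R K)))) = ereal (IPX x0 M \<pi> P)"
    by (rule sums_unique[symmetric])
  then show ?thesis
    unfolding cost_def cost_term[OF meas int] by (simp add: IPX_def)
qed



lemma unit_exists: "\<exists>x::real^'n. norm x = 1"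
  by (rule exI[of _ "axis undefined 1"]) simp

lemma sphere_eq: "{x::real^'n. norm x = 1} = sphere 0 1"
  by (auto simp: sphere_def)

lemma cont_bf: "continuous_on S (\<lambda>x::real^'n. bf M x x)"
  unfolding bf_def by (intro continuous_intros linear_continuous_on) (simp add: matrix_vector_mul_bounded_linear)

lemma sigma_min_nonneg: "0 \<le> sigma_min (M::real^'n^'n)"
  unfolding sigma_min_def using unit_exists by (intro cInf_greatest) auto

lemma sigma_min_le: "norm u = 1 \<Longrightarrow> sigma_min (M::real^'n^'n) \<le> norm (M *v u)"
  unfolding sigma_min_def by (rule cInf_lower) (auto intro: bdd_belowI[of _ 0])

lemma psd_null:
  fixes N :: "real^'n^'n"
  assumes sym: "\<And>u v. bf N u v = bf N v u" and psd: "\<And>y. 0 \<le> bf N y y" and z: "bf N u u = 0"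
  shows "N *v u = 0"
proof (rule ccontr)
  assume ne: "N *v u \<noteq> 0"
  define v where "v = N *v u"
  define a where "a = bf N v u"
  define c where "c = bf N v v"
  have a_pos: "a > 0" unfolding a_def bf_def v_def using ne by simp
  have c0: "c \<ge> 0" unfolding c_def by (rule psd)
  define t where "t = - a / (c + 1)"
  have q: "bf N (u + t *\<^sub>R v) (u + t *\<^sub>R v) = t * (2 * a + t * c)"
    using z sym[of u v] by (simp add: bf_addL bf_addR bf_scaleL bf_scaleRR a_def c_def algebra_simps power2_eq_square)
  have tneg: "t < 0" unfolding t_def using a_pos c0 by (simp add: divide_neg_pos)
  have "t * c \<ge> - a"
  proof -
    have "t * c = - a * (c / (c + 1))" unfolding t_def by simp
    moreover have "c / (c + 1) \<le> 1" using c0 by simp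
    moreover have "a * (c / (c + 1)) \<le> a * 1"
      using mult_left_mono[of "c/(c+1)" 1 a] a_pos \<open>c / (c + 1) \<le> 1\<close> by simp
    ultimately show ?thesis by simp
  qed
  then have "2 * a + t * c > 0" using a_pos by linarith
  then have "t * (2 * a + t * c) < 0" using tneg by (simp add: mult_neg_pos)
  with q psd[of "u + t *\<^sub>R v"] show False by linarith
qed

lemma sigma_min_qf:
  fixes M :: "real^'n^'n"
  assumes sym: "transpose M = M" and psd: "\<And>y. 0 \<le> bf M y y"
  shows "sigma_min M * (norm x)\<^sup>2 \<le> bf M x x"
proof -
  have symb: "bf M u v = bf M v u" for u v using bf_transpose[of M v u] sym by simp
  obtain u where u: "u \<in> sphere 0 1" and umin: "\<And>y. y \<in> sphere 0 1 \<Longrightarrow> bf M u u \<le> bf M y y"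
    using continuous_attains_inf[OF compact_sphere _ cont_bf, of 0 1 M] unit_exists
    by (auto simp: sphere_def)
  define l where "l = bf M u u"
  have l0: "0 \<le> l" unfolding l_def by (rule psd)
  have nu: "norm u = 1" using u by simp
  have lower: "l * (norm y)\<^sup>2 \<le> bf M y y" for y
  proof (cases "y = 0")
    case True then show ?thesis by (simp add: bf_def)
  next
    case False
    define z where "z = (1 / norm y) *\<^sub>R y"
    have "norm z = 1" unfolding z_def using False by simp
    then have "l \<le> bf M z z" unfolding l_def by (intro umin) simp
    also have "bf M z z = bf M y y / (norm y)\<^sup>2"
      unfolding z_def by (simp add: bf_scaleL bf_scaleRR power2_eq_square)
    finally show ?thesis using False by (simp add: field_simps)
  qed
  define N where "N = M - l *\<^sub>R mat 1"
  have bN: "bf N a b = bf M a b - l * (a \<bullet> b)" for a b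
    unfolding N_def by (simp add: bf_diff bf_scaleR bf_mat1)
  have "N *v u = 0"
  proof (rule psd_null)
    show "bf N a b = bf N b a" for a b unfolding bN by (simp add: symb inner_commute)
    show "0 \<le> bf N y y" for y using lower[of y] unfolding bN by (simp add: power2_norm_eq_inner)
    show "bf N u u = 0" unfolding bN l_def using nu by (simp add: power2_norm_eq_inner[symmetric])
  qed
  then have "M *v u = l *\<^sub>R u" unfolding N_def by (simp add: matrix_vector_mult_diff_rdistrib scaleR_matrix_vector_assoc[symmetric])
  then have "norm (M *v u) = l" using nu l0 by simp
  then have "sigma_min M \<le> l" using sigma_min_le[OF nu, of M] by simp
  then have "sigma_min M * (norm x)\<^sup>2 \<le> l * (norm x)\<^sup>2" by (simp add: mult_right_mono)
  also have "\<dots> \<le> bf M x x" by (rule lower)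
  finally show ?thesis .
qed

lemma sigma_min_pos:
  fixes M :: "real^'n^'n"
  assumes pd: "posdef M"
  shows "0 < sigma_min M"
proof -
  have cont: "continuous_on (sphere 0 1) (\<lambda>x::real^'n. norm (M *v x))"
    by (intro continuous_intros linear_continuous_on) (simp add: matrix_vector_mul_bounded_linear)
  obtain u where u: "u \<in> sphere 0 1" and umin: "\<And>y. y \<in> sphere 0 1 \<Longrightarrow> norm (M *v u) \<le> norm (M *v y)"
    using continuous_attains_inf[OF compact_sphere _ cont] unit_exists
    by (auto simp: sphere_def)
  have nu: "norm u = 1" using u by simp
  then have "u \<noteq> 0" by auto
  then have "u \<bullet> (M *v u) > 0" using pd unfolding posdef_def by blast
  then have Mu: "M *v u \<noteq> 0" by auto
  have "sigma_min M = norm (M *v u)"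
    unfolding sigma_min_def
  proof (rule cInf_eq_minimum)
    show "norm (M *v u) \<in> {norm (M *v x) |x. norm x = 1}" using nu by auto
    show "\<And>y. y \<in> {norm (M *v x) |x. norm x = 1} \<Longrightarrow> norm (M *v u) \<le> y"
      using umin by auto
  qed
  then show ?thesis using Mu by simp
qed



lemma bf_sym_of_transpose: "transpose M = M \<Longrightarrow> bf M u v = bf M v u"
  using bf_transpose[of M v u] by simp

lemma Gam_mv: "Gam A B K i *v x = A i *v x - B i *v (K i *v x)"
  by (simp add: Gam_def matrix_vector_mult_diff_rdistrib matrix_vector_mul_assoc)

lemma LK_mv:
  assumes "PK p A B Q R K = P"
  shows "LK p A B Q R K i *v x = R i *v (K i *v x) - transpose (B i) *v (Eop p P i *v (Gam A B K i *v x))"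
  using assms
  by (simp add: LK_def Let_def Gam_mv matrix_vector_mult_diff_rdistrib matrix_vector_mult_add_rdistrib
      matrix_vector_mul_assoc[symmetric] matrix_vector_mult_diff_distrib del: transpose_matrix_vector)

lemma Y_identity:
  fixes p :: "'m::finite \<Rightarrow> 'm \<Rightarrow> real"
  assumes Psol: "\<forall>i. P i = Wf Q R K i + Lop p (Gam A B K) P i"
    and PKe: "PK p A B Q R K = P"
    and Rsym: "transpose (R i) = R i"
    and Esym: "transpose (Eop p P i) = Eop p P i"
  shows "bf (Wf Q R K2 i + Lop p (Gam A B K2) P i - P i) x x
     = - 2 * ((K i *v x - K2 i *v x) \<bullet> (LK p A B Q R K i *v x))
       + bf (R i + transpose (B i) ** Eop p P i ** B i) (K i *v x - K2 i *v x) (K i *v x - K2 i *v x)"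
proof -
  define E where "E = Eop p P i"
  define g where "g = Gam A B K i *v x"
  define k where "k = K i *v x"
  define y where "y = K i *v x - K2 i *v x"
  have k2: "K2 i *v x = k - y" unfolding y_def k_def by simp
  have h1: "bf (Wf Q R K2 i) x x = bf (Q i) x x + bf (R i) (k - y) (k - y)"
    by (simp add: Wf_def bf_add bf_mult3 k2)
  have g2: "Gam A B K2 i *v x = g + B i *v y"
    unfolding g_def y_def by (simp add: Gam_mv matrix_vector_mult_diff_distrib)
  have h2: "bf (Lop p (Gam A B K2) P i) x x = bf E (g + B i *v y) (g + B i *v y)"
    by (simp add: Lop_def bf_mult3 g2 E_def)
  have h3: "bf (P i) x x = bf (Q i) x x + bf (R i) k k + bf E g g"
  proof -
    have "P i = Wf Q R K i + Lop p (Gam A B K) P i" using Psol by blast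
    then have "bf (P i) x x = bf (Wf Q R K i + Lop p (Gam A B K) P i) x x" by simp
    then show ?thesis by (simp add: Wf_def bf_add Lop_def bf_mult3 E_def g_def k_def)
  qed
  have h5: "y \<bullet> (LK p A B Q R K i *v x) = bf (R i) y k - bf E (B i *v y) g"
    unfolding LK_mv[OF PKe] by (simp add: inner_diff_right bf_def E_def g_def k_def dot_transpose del: transpose_matrix_vector)
  have h6: "bf (R i + transpose (B i) ** E ** B i) y y = bf (R i) y y + bf E (B i *v y) (B i *v y)"
    by (simp add: bf_add bf_mult3)
  have sR: "bf (R i) k y = bf (R i) y k" by (rule bf_sym_of_transpose[OF Rsym])
  have sE: "bf E g (B i *v y) = bf E (B i *v y) g" unfolding E_def by (rule bf_sym_of_transpose[OF Esym])
  have L: "bf (Wf Q R K2 i + Lop p (Gam A B K2) P i - P i) x x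
      = bf (Q i) x x + bf (R i) (k - y) (k - y) + bf E (g + B i *v y) (g + B i *v y) - (bf (Q i) x x + bf (R i) k k + bf E g g)"
    by (simp only: bf_diff bf_add h1 h2 h3)
  have Rt: "- 2 * ((K i *v x - K2 i *v x) \<bullet> (LK p A B Q R K i *v x))
       + bf (R i + transpose (B i) ** Eop p P i ** B i) (K i *v x - K2 i *v x) (K i *v x - K2 i *v x)
      = - 2 * (bf (R i) y k - bf E (B i *v y) g) + (bf (R i) y y + bf E (B i *v y) (B i *v y))"
    unfolding y_def[symmetric] E_def[symmetric] h5 h6 ..
  have e1: "bf (R i) (k - y) (k - y) = bf (R i) k k - bf (R i) k y - bf (R i) y k + bf (R i) y y"
    by (simp add: bf_diffL bf_diffR)
  have e2: "bf E (g + B i *v y) (g + B i *v y) = bf E g g + bf E g (B i *v y) + bf E (B i *v y) g + bf E (B i *v y) (B i *v y)"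
    by (simp add: bf_addL bf_addR)
  show ?thesis unfolding L Rt e1 e2 sR sE by (simp add: algebra_simps)
qed



lemma sum4_perm:
  "(\<Sum>a\<in>A. \<Sum>b\<in>B. \<Sum>c\<in>C. \<Sum>d\<in>D. f a b c d) = (\<Sum>d\<in>D. \<Sum>c\<in>C. \<Sum>b\<in>B. \<Sum>a\<in>A. f a b c d)"
proof -
  have "(\<Sum>a\<in>A. \<Sum>b\<in>B. \<Sum>c\<in>C. \<Sum>d\<in>D. f a b c d) = (\<Sum>a\<in>A. \<Sum>b\<in>B. \<Sum>d\<in>D. \<Sum>c\<in>C. f a b c d)"
    by (rule sum.cong[OF refl], rule sum.cong[OF refl], rule sum.swap)
  also have "\<dots> = (\<Sum>a\<in>A. \<Sum>d\<in>D. \<Sum>b\<in>B. \<Sum>c\<in>C. f a b c d)"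
    by (rule sum.cong[OF refl], rule sum.swap)
  also have "\<dots> = (\<Sum>d\<in>D. \<Sum>a\<in>A. \<Sum>b\<in>B. \<Sum>c\<in>C. f a b c d)"
    by (rule sum.swap)
  also have "\<dots> = (\<Sum>d\<in>D. \<Sum>a\<in>A. \<Sum>c\<in>C. \<Sum>b\<in>B. f a b c d)"
    by (rule sum.cong[OF refl], rule sum.cong[OF refl], rule sum.swap)
  also have "\<dots> = (\<Sum>d\<in>D. \<Sum>c\<in>C. \<Sum>a\<in>A. \<Sum>b\<in>B. f a b c d)"
    by (rule sum.cong[OF refl], rule sum.swap)
  also have "\<dots> = (\<Sum>d\<in>D. \<Sum>c\<in>C. \<Sum>b\<in>B. \<Sum>a\<in>A. f a b c d)"
    by (rule sum.cong[OF refl], rule sum.cong[OF refl], rule sum.swap)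
  finally show ?thesis .
qed

lemma fr_GVG:
  fixes X :: "real^'n^'n" and G :: "real^'n^'n" and V :: "real^'n^'n"
  shows "fr X (transpose G ** V ** G) = fr (G ** X ** transpose G) V"
proof -
  have l: "fr X (transpose G ** V ** G) = (\<Sum>a\<in>UNIV. \<Sum>b\<in>UNIV. \<Sum>c\<in>UNIV. \<Sum>d\<in>UNIV. X$a$b * G$d$a * V$d$c * G$c$b)"
    by (simp add: fr_def matrix_matrix_mult_def transpose_def sum_distrib_left sum_distrib_right mult_ac)
  have r: "fr (G ** X ** transpose G) V = (\<Sum>d\<in>UNIV. \<Sum>c\<in>UNIV. \<Sum>b\<in>UNIV. \<Sum>a\<in>UNIV. X$a$b * G$d$a * V$d$c * G$c$b)"
    by (simp add: fr_def matrix_matrix_mult_def transpose_def sum_distrib_left sum_distrib_right mult_ac)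
  show ?thesis unfolding l r by (rule sum4_perm)
qed

lemma fr_Z:
  fixes X :: "real^'n^'n" and L :: "real^'n^'k"
  shows "fr X (transpose L ** mat 1 ** L) = (\<Sum>r\<in>UNIV. bf X (L$r) (L$r))"
proof -
  have "fr X (transpose L ** mat 1 ** L) = (\<Sum>a\<in>UNIV. \<Sum>b\<in>UNIV. \<Sum>r\<in>UNIV. X$a$b * (L$r$a * L$r$b))"
    unfolding matrix_mul_rid by (simp add: fr_def matrix_matrix_mult_def transpose_def sum_distrib_left)
  also have "\<dots> = (\<Sum>a\<in>UNIV. \<Sum>r\<in>UNIV. \<Sum>b\<in>UNIV. X$a$b * (L$r$a * L$r$b))"
    by (rule sum.cong[OF refl], rule sum.swap)
  also have "\<dots> = (\<Sum>r\<in>UNIV. \<Sum>a\<in>UNIV. \<Sum>b\<in>UNIV. X$a$b * (L$r$a * L$r$b))"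
    by (rule sum.swap)
  also have "\<dots> = (\<Sum>r\<in>UNIV. bf X (L$r) (L$r))"
    by (simp add: bf_entry mult_ac)
  finally show ?thesis .
qed

lemma fr_addL: "fr (X + Y) M = fr X M + fr Y M"
  by (simp add: fr_def algebra_simps sum.distrib)
lemma fr_zeroL: "fr 0 M = 0"
  by (simp add: fr_def)
lemma fr_sumL: "fr (\<Sum>j\<in>J. f j) M = (\<Sum>j\<in>J. fr (f j) M)"
  by (induction J rule: infinite_finite_induct) (auto simp: fr_zeroL fr_addL)

lemma Lop_expand: "Lop p G V i = (\<Sum>j\<in>UNIV. p i j *\<^sub>R (transpose (G i) ** V j ** G i))"
  by (rule bf_ext) (simp add: bf_Lop bf_sum bf_scaleR bf_mult3)

lemma dual1:
  fixes p :: "'m::finite \<Rightarrow> 'm \<Rightarrow> real"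
  shows "(\<Sum>i\<in>UNIV. fr (X i) (Lop p G V i)) = (\<Sum>j\<in>UNIV. fr (Top p G X j) (V j))"
proof -
  have "(\<Sum>i\<in>UNIV. fr (X i) (Lop p G V i)) = (\<Sum>i\<in>UNIV. \<Sum>j\<in>UNIV. p i j * fr (G i ** X i ** transpose (G i)) (V j))"
    by (simp add: Lop_expand fr_sum fr_scaleR fr_GVG)
  also have "\<dots> = (\<Sum>j\<in>UNIV. \<Sum>i\<in>UNIV. p i j * fr (G i ** X i ** transpose (G i)) (V j))"
    by (rule sum.swap)
  also have "\<dots> = (\<Sum>j\<in>UNIV. fr (Top p G X j) (V j))"
    by (simp add: Top_def fr_sumL fr_scaleL)
  finally show ?thesis .
qed

lemma dualn:
  fixes p :: "'m::finite \<Rightarrow> 'm \<Rightarrow> real"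
  shows "(\<Sum>i\<in>UNIV. fr (X i) ((Lop p G ^^ t) V i)) = (\<Sum>j\<in>UNIV. fr ((Top p G ^^ t) X j) (V j))"
proof (induction t arbitrary: V)
  case 0 then show ?case by simp
next
  case (Suc t)
  have "(\<Sum>i\<in>UNIV. fr (X i) ((Lop p G ^^ Suc t) V i)) = (\<Sum>i\<in>UNIV. fr (X i) ((Lop p G ^^ t) (Lop p G V) i))"
    by (simp add: funpow_Suc_right del: funpow.simps)
  also have "\<dots> = (\<Sum>j\<in>UNIV. fr ((Top p G ^^ t) X j) (Lop p G V j))" by (rule Suc.IH)
  also have "\<dots> = (\<Sum>j\<in>UNIV. fr (Top p G ((Top p G ^^ t) X) j) (V j))" by (rule dual1)
  finally show ?case by simp
qed

lemma IPX_dual: "IPX x0 M \<pi> V = (\<Sum>i\<in>UNIV. fr (X0 M x0 \<pi> i) (V i))"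
  by (simp add: IPX_def X0_def fr_scaleL)

definition U :: "'n \<Rightarrow> 'n \<Rightarrow> real^'n^'n" where
  "U a b = (\<chi> c d. if c = a \<and> d = b then 1 else 0)"

lemma fr_U: "fr X (U a b) = X$a$b"
proof -
  have "(\<Sum>ba\<in>UNIV. X$aa$ba * (if aa = a \<and> ba = b then 1 else 0)) = (if aa = a then X$a$b else 0)" for aa
  proof (cases "aa = a")
    case True
    have "(\<Sum>ba\<in>UNIV. X$aa$ba * (if aa = a \<and> ba = b then 1 else 0)) = (\<Sum>ba\<in>UNIV. if ba = b then X$a$b else 0)"
      by (rule sum.cong) (auto simp: True)
    then show ?thesis using True by simp
  qed simp
  then show ?thesis by (simp add: fr_def U_def)
qed

lemma sums_mat:
  fixes f :: "nat \<Rightarrow> real^'n^'m"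
  assumes "\<And>a b. (\<lambda>t. f t $ a $ b) sums (s $ a $ b)"
  shows "f sums s"
  unfolding sums_def
proof (rule vec_tendstoI)
  fix a
  show "(\<lambda>n. (\<Sum>t<n. f t) $ a) \<longlonglongrightarrow> s $ a"
  proof (rule vec_tendstoI)
    fix b
    show "(\<lambda>n. (\<Sum>t<n. f t) $ a $ b) \<longlonglongrightarrow> s $ a $ b"
      using assms[of a b] unfolding sums_def by simp
  qed
qed

lemma XK_sums:
  fixes x0 :: "'a \<Rightarrow> real^'d" and p :: "'m::finite \<Rightarrow> 'm \<Rightarrow> real"
  assumes mss: "mss p (Gam A B K)" and pn: "\<forall>i j. p i j \<ge> 0"
  shows "(\<lambda>t. (Top p (Gam A B K) ^^ t) (X0 M x0 \<pi>) i) sums XK M x0 \<pi> p A B K i"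
proof -
  let ?G = "Gam A B K"
  have ent: "summable (\<lambda>t. (Top p ?G ^^ t) (X0 M x0 \<pi>) i $ a $ b)" for a b
  proof -
    define E where "E = (\<lambda>j. if j = i then U a b else (0::real^'d^'d))"
    have eq: "(Top p ?G ^^ t) (X0 M x0 \<pi>) i $ a $ b = IPX x0 M \<pi> ((Lop p ?G ^^ t) E)" for t
    proof -
      have "(Top p ?G ^^ t) (X0 M x0 \<pi>) i $ a $ b = (\<Sum>j\<in>UNIV. fr ((Top p ?G ^^ t) (X0 M x0 \<pi>) j) (E j))"
        by (simp add: E_def fr_U if_distrib fr_zero cong: if_cong)
      also have "\<dots> = IPX x0 M \<pi> ((Lop p ?G ^^ t) E)"
        unfolding IPX_dual dualn ..
      finally show ?thesis .
    qed
    obtain PE where PE: "\<forall>j. PE j = E j + Lop p ?G PE j" using lyap_exists[OF mss pn] by blast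
    have "(\<lambda>t. IPX x0 M \<pi> ((Lop p ?G ^^ t) E)) sums IPX x0 M \<pi> PE" by (rule IPX_lim[OF mss pn PE])
    then have "summable (\<lambda>t. IPX x0 M \<pi> ((Lop p ?G ^^ t) E))" by (rule sums_summable)
    then show ?thesis by (simp only: eq)
  qed
  define s where "s = (\<chi> a b. \<Sum>t. (Top p ?G ^^ t) (X0 M x0 \<pi>) i $ a $ b)"
  have "(\<lambda>t. (Top p ?G ^^ t) (X0 M x0 \<pi>) i) sums s"
    by (rule sums_mat) (simp add: s_def summable_sums[OF ent])
  then show ?thesis unfolding XK_def by (simp add: sums_iff)
qed

lemma XK_IPX_sums:
  fixes x0 :: "'a \<Rightarrow> real^'d" and p :: "'m::finite \<Rightarrow> 'm \<Rightarrow> real"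
  assumes mss: "mss p (Gam A B K)" and pn: "\<forall>i j. p i j \<ge> 0"
  shows "(\<lambda>t. IPX x0 M \<pi> ((Lop p (Gam A B K) ^^ t) Z)) sums (\<Sum>i\<in>UNIV. fr (XK M x0 \<pi> p A B K i) (Z i))"
proof -
  have e: "IPX x0 M \<pi> ((Lop p (Gam A B K) ^^ t) Z) =
     (\<Sum>i\<in>UNIV. \<Sum>a\<in>UNIV. \<Sum>b\<in>UNIV. (Top p (Gam A B K) ^^ t) (X0 M x0 \<pi>) i $ a $ b * Z i $ a $ b)" for t
    unfolding IPX_dual dualn by (simp only: fr_def)
  show ?thesis
    unfolding e fr_def
    by (intro sums_sum sums_mult2 sums_vec_nth XK_sums[OF mss pn])
qed



lemma PK_sol:
  fixes p :: "'m::finite \<Rightarrow> 'm \<Rightarrow> real"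
  assumes mss: "mss p (Gam A B K)" and pn: "\<forall>i j. p i j \<ge> 0"
  shows "\<forall>i. PK p A B Q R K i = Wf Q R K i + Lop p (Gam A B K) (PK p A B Q R K) i"
proof -
  have e: "PK p A B Q R K = (THE P. \<forall>i. P i = Wf Q R K i + Lop p (Gam A B K) P i)"
    by (simp add: PK_def Wf_def Lop_def)
  show ?thesis unfolding e by (rule theI'[OF lyap_ex1[OF mss pn]])
qed

lemma cost_PK:
  fixes x0 :: "'a \<Rightarrow> real^'d" and p :: "'m::finite \<Rightarrow> 'm \<Rightarrow> real"
  assumes meas: "x0 \<in> borel_measurable M" and int: "integrable M (\<lambda>\<omega>. (norm (x0 \<omega>))\<^sup>2)"
    and mss: "mss p (Gam A B K)" and pn: "\<forall>i j. p i j \<ge> 0"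
  shows "cost M x0 \<pi> p A B Q R K = ereal (IPX x0 M \<pi> (PK p A B Q R K))"
  by (rule cost_eq[OF meas int mss pn PK_sol[OF mss pn]])

lemma posdef_sym: "posdef M \<Longrightarrow> transpose M = M"
  by (simp add: posdef_def)

lemma posdef_psd: "posdef M \<Longrightarrow> 0 \<le> bf M y y"
  unfolding posdef_def bf_def by (cases "y = 0") (auto intro: less_imp_le)

lemma Wf_sym:
  assumes "\<And>j. transpose (Q j) = Q j" "\<And>j. transpose (R j) = R j"
  shows "transpose (Wf Q R K j) = Wf Q R K j"
  by (rule bf_ext) (simp add: Wf_def bf_transpose bf_add bf_mult3 bf_sym_of_transpose[OF assms(1)] bf_sym_of_transpose[OF assms(2)])

lemma Wf_ge:
  assumes "\<And>j y. 0 \<le> bf (R j) y y"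
  shows "bf (Q j) y y \<le> bf (Wf Q R K j) y y"
  using assms[of j "K j *v y"] by (simp add: Wf_def bf_add bf_mult3)

lemma transpose_Eop: "transpose (Eop p V i) = Eop p (\<lambda>j. transpose (V j)) i"
  by (rule bf_ext) (simp add: bf_transpose bf_Eop)

lemma Eop_psd:
  assumes "\<forall>i j. p i j \<ge> 0" "\<And>j y. 0 \<le> bf (V j) y y"
  shows "0 \<le> bf (Eop p V i) y y"
  unfolding bf_Eop using assms by (auto intro!: sum_nonneg mult_nonneg_nonneg)

lemma IPX_add: "IPX x0 M \<pi> (\<lambda>i. V i + V' i) = IPX x0 M \<pi> V + IPX x0 M \<pi> V'"
  by (simp add: IPX_def fr_add distrib_left sum.distrib)
lemma IPX_diff: "IPX x0 M \<pi> (\<lambda>i. V i - V' i) = IPX x0 M \<pi> V - IPX x0 M \<pi> V'"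
  by (simp add: IPX_def fr_diff right_diff_distrib sum_subtractf)
lemma IPX_scale: "IPX x0 M \<pi> (\<lambda>i. c *\<^sub>R V i) = c * IPX x0 M \<pi> V"
  by (simp add: IPX_def fr_scaleR sum_distrib_left mult_ac)
lemma IPX_sum: "IPX x0 M \<pi> (\<lambda>i. \<Sum>t\<in>T. f t i) = (\<Sum>t\<in>T. IPX x0 M \<pi> (f t))"
  unfolding IPX_def fr_sum sum_distrib_left by (rule sum.swap)

lemma IPX_mono:
  fixes x0 :: "'a \<Rightarrow> real^'d" and \<pi> :: "'m::finite \<Rightarrow> real"
  assumes meas: "x0 \<in> borel_measurable M" and int: "integrable M (\<lambda>\<omega>. (norm (x0 \<omega>))\<^sup>2)"
    and pin: "\<And>i. 0 \<le> \<pi> i" and le: "\<And>i x. bf (V i) x x \<le> bf (V' i) x x"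
  shows "IPX x0 M \<pi> V \<le> IPX x0 M \<pi> V'"
  unfolding IPX_def by (intro sum_mono mult_left_mono fr_mono[OF meas int] le pin)

lemma IPX_Lpow_tendsto0:
  fixes p :: "'m::finite \<Rightarrow> 'm \<Rightarrow> real" and G :: "'m \<Rightarrow> real^'d^'d"
  assumes mss: "mss p G" and pn: "\<forall>i j. p i j \<ge> 0"
  shows "(\<lambda>n. IPX x0 M \<pi> ((Lop p G ^^ n) D)) \<longlonglongrightarrow> 0"
proof -
  have "(\<lambda>n. \<Sum>i\<in>UNIV. \<pi> i * (\<Sum>a\<in>UNIV. \<Sum>b\<in>UNIV. second_moment M x0 $a$b * bf ((Lop p G ^^ n) D i) (axis a 1) (axis b 1)))
     \<longlonglongrightarrow> (\<Sum>i\<in>UNIV. \<pi> i * (\<Sum>a\<in>UNIV. \<Sum>b\<in>(UNIV::'d set). second_moment M x0 $a$b * 0))"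
    by (intro tendsto_sum tendsto_mult_left Lpow_tendsto0[OF mss pn])
  then show ?thesis by (simp add: IPX_def fr_bf)
qed

lemma bf_Z: "bf (transpose L ** mat 1 ** L) x x = (norm (L *v x))\<^sup>2"
  by (simp only: bf_mult3 bf_mat1 power2_norm_eq_inner)

lemma max_norm_ge: "specnorm (V i) \<le> max_norm (V::'m::finite \<Rightarrow> real^'n^'k)"
  unfolding max_norm_def by (rule Max_ge) auto

lemma specnorm_nonneg: "0 \<le> specnorm (M::real^'n^'k)"
  unfolding specnorm_def by (rule onorm_pos_le) simp

lemma Lambda_min_le: "Lambda_min V \<le> sigma_min (V i)"
  unfolding Lambda_min_def by (rule Min_le) auto

lemma Lambda_min_pos: "(\<And>i. posdef (V i)) \<Longrightarrow> 0 < Lambda_min (V::'m::finite \<Rightarrow> real^'n^'n)"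
  unfolding Lambda_min_def by (subst Min_gr_iff) (auto intro: sigma_min_pos)



lemma Y2_bound:
  fixes p :: "'m::finite \<Rightarrow> 'm \<Rightarrow> real" and A :: "'m \<Rightarrow> real^'d^'d" and B :: "'m \<Rightarrow> real^'k^'d"
    and Q :: "'m \<Rightarrow> real^'d^'d" and R :: "'m \<Rightarrow> real^'k^'k" and K :: "'m \<Rightarrow> real^'d^'k"
  assumes mss: "mss p (Gam A B K)" and pn: "\<forall>i j. p i j \<ge> 0"
    and Qs: "\<And>j. transpose (Q j) = Q j" and Rs: "\<And>j. transpose (R j) = R j"
    and eta0: "0 < \<eta>"
    and eta: "\<eta> \<le> 1 / (2 * max_norm (\<lambda>i. R i + transpose (B i) ** Eop p (PK p A B Q R K) i ** B i))"
  shows "bf (Wf Q R (\<lambda>i. K i - (2 * \<eta>) *\<^sub>R LK p A B Q R K i) i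
            + Lop p (Gam A B (\<lambda>i. K i - (2 * \<eta>) *\<^sub>R LK p A B Q R K i)) (PK p A B Q R K) i
            - PK p A B Q R K i) x x
       \<le> - 2 * \<eta> * (norm (LK p A B Q R K i *v x))\<^sup>2"
proof -
  define P where "P = PK p A B Q R K"
  define L where "L = LK p A B Q R K"
  define K2 where "K2 = (\<lambda>i. K i - (2 * \<eta>) *\<^sub>R L i)"
  define S where "S = (\<lambda>i. R i + transpose (B i) ** Eop p P i ** B i)"
  have Psol: "\<forall>i. P i = Wf Q R K i + Lop p (Gam A B K) P i" unfolding P_def by (rule PK_sol[OF mss pn])
  have Psym: "transpose (P j) = P j" for j by (rule lyap_sym[OF mss pn Psol Wf_sym[OF Qs Rs]])
  have Esym: "transpose (Eop p P i) = Eop p P i" by (simp add: transpose_Eop Psym)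
  have Y: "bf (Wf Q R K2 i + Lop p (Gam A B K2) P i - P i) x x
      = - 2 * ((K i *v x - K2 i *v x) \<bullet> (L i *v x)) + bf (S i) (K i *v x - K2 i *v x) (K i *v x - K2 i *v x)"
    unfolding L_def S_def by (rule Y_identity[OF Psol P_def[symmetric] Rs Esym])
  define l where "l = L i *v x"
  have y: "K i *v x - K2 i *v x = (2 * \<eta>) *\<^sub>R l"
    unfolding K2_def l_def by (simp add: matrix_vector_mult_diff_rdistrib scaleR_matrix_vector_assoc[symmetric])
  define ns where "ns = max_norm S"
  have ns_ge: "specnorm (S i) \<le> ns" unfolding ns_def by (rule max_norm_ge)
  have eta': "\<eta> \<le> 1 / (2 * ns)" using eta unfolding ns_def S_def P_def .
  have ns_pos: "0 < ns"
  proof (rule ccontr)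
    assume "\<not> 0 < ns"
    then have "1 / (2 * ns) \<le> 0" by (intro divide_nonneg_nonpos) auto
    with eta' eta0 show False by linarith
  qed
  have two: "2 * \<eta> * ns \<le> 1" using eta' ns_pos by (simp add: field_simps)
  have bS: "bf (S i) l l \<le> ns * (norm l)\<^sup>2"
    using bf_le_specnorm[of "S i" l] mult_right_mono[OF ns_ge, of "(norm l)\<^sup>2"] by simp
  have e: "bf (Wf Q R K2 i + Lop p (Gam A B K2) P i - P i) x x = - 4 * \<eta> * (norm l)\<^sup>2 + 4 * \<eta>\<^sup>2 * bf (S i) l l"
  proof -
    have nn: "norm l * norm l = l \<bullet> l" by (simp add: power2_norm_eq_inner[symmetric] power2_eq_square)
    show ?thesis unfolding Y y l_def[symmetric]
      by (simp add: bf_scaleL bf_scaleRR nn power2_eq_square algebra_simps)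
  qed
  have f1: "4 * \<eta>\<^sup>2 * bf (S i) l l \<le> 4 * \<eta>\<^sup>2 * (ns * (norm l)\<^sup>2)"
    by (rule mult_left_mono[OF bS]) simp
  have f2: "(2 * \<eta> * ns) * (2 * \<eta> * (norm l)\<^sup>2) \<le> 1 * (2 * \<eta> * (norm l)\<^sup>2)"
    by (rule mult_right_mono[OF two]) (use eta0 in simp)
  have f3: "4 * \<eta>\<^sup>2 * (ns * (norm l)\<^sup>2) = (2 * \<eta> * ns) * (2 * \<eta> * (norm l)\<^sup>2)"
    by (simp add: power2_eq_square algebra_simps)
  have "bf (Wf Q R K2 i + Lop p (Gam A B K2) P i - P i) x x \<le> - 2 * \<eta> * (norm l)\<^sup>2"
    using e f1 f2 f3 by linarith
  then show ?thesis unfolding K2_def L_def P_def l_def .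
qed

lemma K2_stable:
  fixes p :: "'m::finite \<Rightarrow> 'm \<Rightarrow> real" and A :: "'m \<Rightarrow> real^'d^'d" and B :: "'m \<Rightarrow> real^'k^'d"
    and Q :: "'m \<Rightarrow> real^'d^'d" and R :: "'m \<Rightarrow> real^'k^'k" and K2 :: "'m \<Rightarrow> real^'d^'k"
  assumes pn: "\<forall>i j. p i j \<ge> 0"
    and Qpd: "\<And>j. posdef (Q j)" and Rp: "\<And>j y. 0 \<le> bf (R j) y y"
    and Yb: "\<And>i x. bf (Wf Q R K2 i + Lop p (Gam A B K2) P i - P i) x x \<le> 0"
    and Pp: "\<And>j y. 0 \<le> bf (P j) y y"
  shows "mss p (Gam A B K2)"
proof -
  let ?G = "Gam A B K2"
  let ?W = "Wf Q R K2"
  define cq where "cq = Lambda_min Q"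
  have cq: "0 < cq" unfolding cq_def by (rule Lambda_min_pos[OF Qpd])
  have W2ge: "bf (cq *\<^sub>R mat 1) y y \<le> bf (?W j) y y" for j y
  proof -
    have "cq * (norm y)\<^sup>2 \<le> sigma_min (Q j) * (norm y)\<^sup>2"
      unfolding cq_def by (rule mult_right_mono[OF Lambda_min_le]) simp
    also have "\<dots> \<le> bf (Q j) y y"
      by (rule sigma_min_qf[OF posdef_sym[OF Qpd] posdef_psd[OF Qpd]])
    also have "\<dots> \<le> bf (?W j) y y" by (rule Wf_ge[OF Rp])
    finally show ?thesis by (simp add: bf_scaleR bf_mat1 power2_norm_eq_inner)
  qed
  have lyap: "bf (?W j + Lop p ?G P j) y y \<le> bf (P j) y y" for j y
    using Yb[of j y] by (simp add: bf_diff)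
  have claim: "(\<Sum>t<n. bf ((Lop p ?G ^^ t) ?W i) x x) + bf ((Lop p ?G ^^ n) P i) x x \<le> bf (P i) x x" for n i x
  proof (induction n arbitrary: i x)
    case 0 then show ?case by simp
  next
    case (Suc n)
    have m: "bf ((Lop p ?G ^^ n) (\<lambda>j. ?W j + Lop p ?G P j) i) x x \<le> bf ((Lop p ?G ^^ n) P i) x x"
      by (rule Lpow_mono[OF pn lyap])
    have "(Lop p ?G ^^ n) (\<lambda>j. ?W j + Lop p ?G P j) i = (Lop p ?G ^^ n) ?W i + (Lop p ?G ^^ Suc n) P i"
      by (simp add: Lpow_add funpow_Suc_right del: funpow.simps)
    with m have "bf ((Lop p ?G ^^ n) ?W i) x x + bf ((Lop p ?G ^^ Suc n) P i) x x \<le> bf ((Lop p ?G ^^ n) P i) x x"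
      by (simp add: bf_add)
    with Suc.IH[of i x] show ?case by simp
  qed
  show ?thesis unfolding mss_iff
  proof (intro allI)
    fix i x
    let ?f = "\<lambda>t. bf ((Lop p ?G ^^ t) (\<lambda>_. mat 1) i) x x"
    have fnn: "0 \<le> ?f t" for t by (rule Lpow_psd[OF pn]) (simp add: bf_mat1)
    have fle: "cq * ?f t \<le> bf ((Lop p ?G ^^ t) ?W i) x x" for t
    proof -
      have "bf ((Lop p ?G ^^ t) (\<lambda>j. cq *\<^sub>R mat 1) i) x x \<le> bf ((Lop p ?G ^^ t) ?W i) x x"
        by (rule Lpow_mono[OF pn W2ge])
      then show ?thesis using Lpow_scale[of t p ?G cq "\<lambda>_. mat 1"] by (simp add: bf_scaleR)
    qed
    have "summable ?f"
    proof (rule summableI_nonneg_bounded[OF fnn])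
      fix n
      have "cq * (\<Sum>t<n. ?f t) \<le> (\<Sum>t<n. bf ((Lop p ?G ^^ t) ?W i) x x)"
        unfolding sum_distrib_left by (rule sum_mono) (rule fle)
      also have "\<dots> \<le> bf (P i) x x"
      proof -
        have c1: "(\<Sum>t<n. bf ((Lop p ?G ^^ t) ?W i) x x) + bf ((Lop p ?G ^^ n) P i) x x \<le> bf (P i) x x"
          by (rule claim)
        have c2: "0 \<le> bf ((Lop p ?G ^^ n) P i) x x" by (rule Lpow_psd[OF pn Pp])
        from c1 c2 show ?thesis by linarith
      qed
      finally show "(\<Sum>t<n. ?f t) \<le> bf (P i) x x / cq" using cq by (simp add: field_simps)
    qed
    then show "?f \<longlonglongrightarrow> 0" by (rule summable_LIMSEQ_zero)
  qed
qed



lemma descent: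
  fixes x0 :: "'a \<Rightarrow> real^'d" and \<pi> :: "'m::finite \<Rightarrow> real" and p :: "'m \<Rightarrow> 'm \<Rightarrow> real"
    and G2 :: "'m \<Rightarrow> real^'d^'d"
  assumes meas: "x0 \<in> borel_measurable M" and int: "integrable M (\<lambda>\<omega>. (norm (x0 \<omega>))\<^sup>2)"
    and pin: "\<And>i. 0 \<le> \<pi> i" and mss2: "mss p G2" and pn: "\<forall>i j. p i j \<ge> 0"
    and P2sol: "\<forall>i. P2 i = W2 i + Lop p G2 P2 i"
    and Yb: "\<And>i x. bf (W2 i + Lop p G2 P i - P i) x x \<le> - c * bf (Z i) x x"
    and c0: "0 \<le> c" and Zp: "\<And>i x. 0 \<le> bf (Z i) x x"
  shows "IPX x0 M \<pi> P2 - IPX x0 M \<pi> P \<le> - c * IPX x0 M \<pi> Z"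
proof -
  define Y where "Y = (\<lambda>i. W2 i + Lop p G2 P i - P i)"
  define D where "D = (\<lambda>i. P2 i - P i)"
  have Dsol: "\<forall>i. D i = Y i + Lop p G2 D i"
  proof
    fix i
    have a: "P2 i = W2 i + Lop p G2 P2 i" using P2sol by blast
    have "D i = W2 i + Lop p G2 P2 i - P i" unfolding D_def by (subst a) (rule refl)
    also have "\<dots> = Y i + Lop p G2 D i" unfolding Y_def D_def Lop_diff by simp
    finally show "D i = Y i + Lop p G2 D i" .
  qed
  have Yn: "bf (Y j) y y \<le> bf ((\<lambda>_. 0) j) y y" for j y
  proof -
    have h: "0 \<le> c * bf (Z j) y y" by (rule mult_nonneg_nonneg[OF c0 Zp])
    have z: "bf ((\<lambda>_. 0) j) y y = 0" by (simp add: bf_zero)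
    show ?thesis unfolding z Y_def using Yb[of j y] h by linarith
  qed
  have part: "(\<Sum>t<n. (Lop p G2 ^^ t) Y i) = D i - (Lop p G2 ^^ n) D i" for n i
    by (rule Lpow_partial[OF Dsol])
  have bnd: "bf (D i) x x \<le> bf (Y i) x x + bf ((Lop p G2 ^^ Suc m) D i) x x" for i x m
  proof -
    have "D i = (\<Sum>t<Suc m. (Lop p G2 ^^ t) Y i) + (Lop p G2 ^^ Suc m) D i"
      using part[of i "Suc m"] by simp
    then have e1: "bf (D i) x x = (\<Sum>t<Suc m. bf ((Lop p G2 ^^ t) Y i) x x) + bf ((Lop p G2 ^^ Suc m) D i) x x"
      by (simp add: bf_add bf_sum)
    have e2: "(\<Sum>t<Suc m. bf ((Lop p G2 ^^ t) Y i) x x) = bf (Y i) x x + (\<Sum>t<m. bf ((Lop p G2 ^^ Suc t) Y i) x x)"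
      by (simp only: sum.lessThan_Suc_shift) simp
    have e3: "(\<Sum>t<m. bf ((Lop p G2 ^^ Suc t) Y i) x x) \<le> 0"
    proof (rule sum_nonpos)
      fix t
      have "bf ((Lop p G2 ^^ Suc t) Y i) x x \<le> bf ((Lop p G2 ^^ Suc t) (\<lambda>_. 0) i) x x"
        by (rule Lpow_mono[OF pn Yn])
      then show "bf ((Lop p G2 ^^ Suc t) Y i) x x \<le> 0" by (simp add: Lpow_zero Lop_zero bf_zero)
    qed
    show ?thesis using e1 e2 e3 by linarith
  qed
  have DY: "bf (D i) x x \<le> bf (Y i) x x" for i x
  proof -
    have "(\<lambda>m. bf (Y i) x x + bf ((Lop p G2 ^^ Suc m) D i) x x) \<longlonglongrightarrow> bf (Y i) x x + 0"
      by (intro tendsto_add tendsto_const LIMSEQ_Suc[OF Lpow_tendsto0[OF mss2 pn]])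
    then have lim: "(\<lambda>m. bf (Y i) x x + bf ((Lop p G2 ^^ Suc m) D i) x x) \<longlonglongrightarrow> bf (Y i) x x" by simp
    show ?thesis by (rule LIMSEQ_le_const[OF lim]) (use bnd in auto)
  qed
  have "IPX x0 M \<pi> D \<le> IPX x0 M \<pi> Y" by (rule IPX_mono[OF meas int pin DY])
  also have "\<dots> \<le> IPX x0 M \<pi> (\<lambda>i. (- c) *\<^sub>R Z i)"
    by (rule IPX_mono[OF meas int pin]) (use Yb in \<open>simp add: Y_def bf_scaleR bf_neg\<close>)
  also have "\<dots> = - c * IPX x0 M \<pi> Z" by (rule IPX_scale)
  finally show ?thesis unfolding D_def IPX_diff .
qed

lemma IPX_Z_lower:
  fixes x0 :: "'a \<Rightarrow> real^'d" and \<pi> :: "'m::finite \<Rightarrow> real" and L :: "'m \<Rightarrow> real^'d^'k"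
  assumes S0: "posdef (second_moment M x0)" and pip: "\<And>i. 0 < \<pi> i"
  shows "mu M x0 \<pi> * (\<Sum>i\<in>UNIV. \<Sum>r\<in>UNIV. (norm (L i $ r))\<^sup>2) \<le> IPX x0 M \<pi> (\<lambda>i. transpose (L i) ** mat 1 ** L i)"
proof -
  let ?S = "second_moment M x0"
  let ?s = "sigma_min ?S"
  have s0: "0 \<le> ?s" by (rule sigma_min_nonneg)
  have mn: "Min (range \<pi>) \<le> \<pi> i" for i by (rule Min_le) auto
  have mpos: "0 < Min (range \<pi>)" by (subst Min_gr_iff) (auto intro: pip)
  have frl: "?s * (\<Sum>r\<in>UNIV. (norm (L i $ r))\<^sup>2) \<le> fr ?S (transpose (L i) ** mat 1 ** L i)" for i
    unfolding fr_Z sum_distrib_left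
    by (intro sum_mono sigma_min_qf[OF posdef_sym[OF S0] posdef_psd[OF S0]])
  have "mu M x0 \<pi> * (\<Sum>i\<in>UNIV. \<Sum>r\<in>UNIV. (norm (L i $ r))\<^sup>2)
      = (\<Sum>i\<in>UNIV. Min (range \<pi>) * (?s * (\<Sum>r\<in>UNIV. (norm (L i $ r))\<^sup>2)))"
    by (simp add: mu_def sum_distrib_left mult_ac)
  also have "\<dots> \<le> (\<Sum>i\<in>UNIV. \<pi> i * fr ?S (transpose (L i) ** mat 1 ** L i))"
  proof (rule sum_mono)
    fix i
    have nn: "0 \<le> ?s * (\<Sum>r\<in>UNIV. (norm (L i $ r))\<^sup>2)" using s0 by (simp add: sum_nonneg)
    have "Min (range \<pi>) * (?s * (\<Sum>r\<in>UNIV. (norm (L i $ r))\<^sup>2)) \<le> \<pi> i * (?s * (\<Sum>r\<in>UNIV. (norm (L i $ r))\<^sup>2))"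
      by (rule mult_right_mono[OF mn nn])
    also have "\<dots> \<le> \<pi> i * fr ?S (transpose (L i) ** mat 1 ** L i)"
      by (rule mult_left_mono[OF frl]) (use pip[of i] in simp)
    finally show "Min (range \<pi>) * (?s * (\<Sum>r\<in>UNIV. (norm (L i $ r))\<^sup>2)) \<le> \<pi> i * fr ?S (transpose (L i) ** mat 1 ** L i)" .
  qed
  also have "\<dots> = IPX x0 M \<pi> (\<lambda>i. transpose (L i) ** mat 1 ** L i)" by (simp add: IPX_def)
  finally show ?thesis .
qed



lemma graddom:
  fixes x0 :: "'a \<Rightarrow> real^'d" and \<pi> :: "'m::finite \<Rightarrow> real" and p :: "'m \<Rightarrow> 'm \<Rightarrow> real"
    and A :: "'m \<Rightarrow> real^'d^'d" and B :: "'m \<Rightarrow> real^'k^'d"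
    and Q :: "'m \<Rightarrow> real^'d^'d" and R :: "'m \<Rightarrow> real^'k^'k" and K Ks :: "'m \<Rightarrow> real^'d^'k"
  assumes meas: "x0 \<in> borel_measurable M" and int: "integrable M (\<lambda>\<omega>. (norm (x0 \<omega>))\<^sup>2)"
    and pin: "\<And>i. 0 \<le> \<pi> i" and mssK: "mss p (Gam A B K)" and mssS: "mss p (Gam A B Ks)"
    and pn: "\<forall>i j. p i j \<ge> 0"
    and Qpd: "\<And>j. posdef (Q j)" and Rpd: "\<And>j. posdef (R j)"
  shows "IPX x0 M \<pi> (PK p A B Q R K) - IPX x0 M \<pi> (PK p A B Q R Ks)
     \<le> (\<Sum>i\<in>UNIV. fr (XK M x0 \<pi> p A B Ks i) (transpose (LK p A B Q R K i) ** mat 1 ** LK p A B Q R K i)) / Lambda_min R"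
proof -
  define P where "P = PK p A B Q R K"
  define Ps where "Ps = PK p A B Q R Ks"
  define L where "L = LK p A B Q R K"
  define Z where "Z = (\<lambda>i. transpose (L i) ** mat 1 ** L i)"
  define \<sigma> where "\<sigma> = Lambda_min R"
  define Gs where "Gs = Gam A B Ks"
  have sp: "0 < \<sigma>" unfolding \<sigma>_def by (rule Lambda_min_pos[OF Rpd])
  have Qs: "\<And>j. transpose (Q j) = Q j" and Rs: "\<And>j. transpose (R j) = R j"
    using Qpd Rpd by (auto intro: posdef_sym)
  have Rp: "\<And>j y. 0 \<le> bf (R j) y y" using Rpd by (rule posdef_psd)
  have Qp: "\<And>j y. 0 \<le> bf (Q j) y y" using Qpd by (rule posdef_psd)
  have Psol: "\<forall>i. P i = Wf Q R K i + Lop p (Gam A B K) P i" unfolding P_def by (rule PK_sol[OF mssK pn])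
  have Pssol: "\<forall>i. Ps i = Wf Q R Ks i + Lop p Gs Ps i" unfolding Ps_def Gs_def by (rule PK_sol[OF mssS pn])
  have Psym: "transpose (P j) = P j" for j by (rule lyap_sym[OF mssK pn Psol Wf_sym[OF Qs Rs]])
  have Esym: "transpose (Eop p P i) = Eop p P i" for i by (simp add: transpose_Eop Psym)
  have Wp: "0 \<le> bf (Wf Q R K j) y y" for j y
  proof -
    have "bf (Q j) y y \<le> bf (Wf Q R K j) y y" by (rule Wf_ge[OF Rp])
    then show ?thesis using Qp[of j y] by linarith
  qed
  have Pp: "0 \<le> bf (P j) y y" for j y by (rule lyap_psd[OF mssK pn Psol Wp])
  define Y where "Y = (\<lambda>i. Wf Q R Ks i + Lop p Gs P i - P i)"
  have Ylow: "bf (((-1/\<sigma>) *\<^sub>R Z j)) x x \<le> bf (Y j) x x" for j x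
  proof -
    define y where "y = K j *v x - Ks j *v x"
    define l where "l = L j *v x"
    have Yi: "bf (Y j) x x = - 2 * (y \<bullet> l) + bf (R j + transpose (B j) ** Eop p P j ** B j) y y"
      unfolding Y_def Gs_def y_def l_def L_def
      by (rule Y_identity[OF Psol P_def[symmetric] Rs Esym])
    have bS: "\<sigma> * (norm y)\<^sup>2 \<le> bf (R j + transpose (B j) ** Eop p P j ** B j) y y"
    proof -
      have "\<sigma> * (norm y)\<^sup>2 \<le> sigma_min (R j) * (norm y)\<^sup>2"
        unfolding \<sigma>_def by (rule mult_right_mono[OF Lambda_min_le]) simp
      also have "\<dots> \<le> bf (R j) y y" by (rule sigma_min_qf[OF Rs Rp])
      also have "\<dots> \<le> bf (R j + transpose (B j) ** Eop p P j ** B j) y y"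
      proof -
        have "0 \<le> bf (Eop p P j) (B j *v y) (B j *v y)" by (rule Eop_psd[OF pn Pp])
        then show ?thesis by (simp add: bf_add bf_mult3)
      qed
      finally show ?thesis .
    qed
    have sq: "0 \<le> (norm (\<sigma> *\<^sub>R y - l))\<^sup>2" by simp
    have sq': "(norm (\<sigma> *\<^sub>R y - l))\<^sup>2 = \<sigma> * (\<sigma> * (norm y)\<^sup>2 - 2 * (y \<bullet> l)) + (norm l)\<^sup>2"
      unfolding power2_norm_eq_inner by (simp add: inner_diff_left inner_diff_right inner_commute algebra_simps)
    have "- (norm l)\<^sup>2 \<le> \<sigma> * (\<sigma> * (norm y)\<^sup>2 - 2 * (y \<bullet> l))" using sq sq' by linarith
    then have "(-1/\<sigma>) * (norm l)\<^sup>2 \<le> \<sigma> * (norm y)\<^sup>2 - 2 * (y \<bullet> l)"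
      using sp by (simp add: field_simps)
    moreover have bz: "bf ((-1/\<sigma>) *\<^sub>R Z j) x x = (-1/\<sigma>) * (norm l)\<^sup>2"
      unfolding Z_def l_def by (simp only: bf_scaleR bf_Z)
    ultimately show ?thesis
      unfolding Yi bz using bS by linarith
  qed
  define D where "D = (\<lambda>i. Ps i - P i)"
  have Dsol: "\<forall>i. D i = Y i + Lop p Gs D i"
  proof
    fix i
    have a: "Ps i = Wf Q R Ks i + Lop p Gs Ps i" using Pssol by blast
    have "D i = Wf Q R Ks i + Lop p Gs Ps i - P i" unfolding D_def by (subst a) (rule refl)
    also have "\<dots> = Y i + Lop p Gs D i" unfolding Y_def D_def Lop_diff by simp
    finally show "D i = Y i + Lop p Gs D i" .
  qed
  have mssS': "mss p Gs" unfolding Gs_def by (rule mssS)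
  have Dn: "IPX x0 M \<pi> D = (\<Sum>t<n. IPX x0 M \<pi> ((Lop p Gs ^^ t) Y)) + IPX x0 M \<pi> ((Lop p Gs ^^ n) D)" for n
  proof -
    have "D = (\<lambda>i. (\<Sum>t<n. (Lop p Gs ^^ t) Y i) + (Lop p Gs ^^ n) D i)"
      by (rule ext) (simp add: Lpow_partial[OF Dsol])
    then have "IPX x0 M \<pi> D = IPX x0 M \<pi> (\<lambda>i. (\<Sum>t<n. (Lop p Gs ^^ t) Y i) + (Lop p Gs ^^ n) D i)" by simp
    also have "\<dots> = (\<Sum>t<n. IPX x0 M \<pi> ((Lop p Gs ^^ t) Y)) + IPX x0 M \<pi> ((Lop p Gs ^^ n) D)"
      by (simp add: IPX_add IPX_sum)
    finally show ?thesis .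
  qed
  have tY: "(-1/\<sigma>) * IPX x0 M \<pi> ((Lop p Gs ^^ t) Z) \<le> IPX x0 M \<pi> ((Lop p Gs ^^ t) Y)" for t
  proof -
    have "IPX x0 M \<pi> ((Lop p Gs ^^ t) (\<lambda>j. (-1/\<sigma>) *\<^sub>R Z j)) \<le> IPX x0 M \<pi> ((Lop p Gs ^^ t) Y)"
      by (rule IPX_mono[OF meas int pin]) (rule Lpow_mono[OF pn Ylow])
    then show ?thesis by (simp only: Lpow_scale IPX_scale)
  qed
  define T where "T = (\<Sum>i\<in>UNIV. fr (XK M x0 \<pi> p A B Ks i) (Z i))"
  have Ts: "(\<lambda>t. IPX x0 M \<pi> ((Lop p Gs ^^ t) Z)) sums T"
    unfolding T_def Gs_def by (rule XK_IPX_sums[OF mssS pn])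
  have lim: "(\<lambda>n. (-1/\<sigma>) * (\<Sum>t<n. IPX x0 M \<pi> ((Lop p Gs ^^ t) Z)) + IPX x0 M \<pi> ((Lop p Gs ^^ n) D))
      \<longlonglongrightarrow> (-1/\<sigma>) * T + 0"
    using Ts unfolding sums_def
    by (intro tendsto_add tendsto_mult_left IPX_Lpow_tendsto0[OF mssS' pn])
  have "(-1/\<sigma>) * T + 0 \<le> IPX x0 M \<pi> D"
  proof (rule LIMSEQ_le_const2[OF lim])
    show "\<exists>N. \<forall>n\<ge>N. (-1/\<sigma>) * (\<Sum>t<n. IPX x0 M \<pi> ((Lop p Gs ^^ t) Z)) + IPX x0 M \<pi> ((Lop p Gs ^^ n) D) \<le> IPX x0 M \<pi> D"
    proof (intro exI allI impI)
      fix n :: nat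
      have "(-1/\<sigma>) * (\<Sum>t<n. IPX x0 M \<pi> ((Lop p Gs ^^ t) Z)) \<le> (\<Sum>t<n. IPX x0 M \<pi> ((Lop p Gs ^^ t) Y))"
        unfolding sum_distrib_left by (rule sum_mono) (rule tY)
      then show "(-1/\<sigma>) * (\<Sum>t<n. IPX x0 M \<pi> ((Lop p Gs ^^ t) Z)) + IPX x0 M \<pi> ((Lop p Gs ^^ n) D) \<le> IPX x0 M \<pi> D"
        unfolding Dn[of n] by linarith
    qed
  qed
  then have "(-1/\<sigma>) * T \<le> IPX x0 M \<pi> Ps - IPX x0 M \<pi> P" unfolding D_def IPX_diff by simp
  then have "IPX x0 M \<pi> P - IPX x0 M \<pi> Ps \<le> T / \<sigma>" by (simp add: field_simps)
  then show ?thesis unfolding T_def Z_def L_def \<sigma>_def P_def Ps_def .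
qed


theorem lemma9:
  fixes M :: "'a measure" and x0 :: "'a \<Rightarrow> real^'d::finite"
    and \<pi> :: "'m::finite \<Rightarrow> real" and p :: "'m \<Rightarrow> 'm \<Rightarrow> real"
    and A :: "'m \<Rightarrow> real^'d^'d" and B :: "'m \<Rightarrow> real^'k::finite^'d"
    and Q :: "'m \<Rightarrow> real^'d^'d" and R :: "'m \<Rightarrow> real^'k^'k"
    and K Kopt :: "'m \<Rightarrow> real^'d^'k" and \<eta> :: real
  assumes "prob_space M"
    and "x0 \<in> borel_measurable M"
    and "integrable M (\<lambda>\<omega>. (norm (x0 \<omega>))\<^sup>2)"
    and "posdef (second_moment M x0)"
    and "stochastic p"
    and "\<forall>i. \<pi> i > 0" and "(\<Sum>i\<in>UNIV. \<pi> i) = 1"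
    and "\<exists>K0. K0 \<in> stabK p A B"
    and "\<forall>i. posdef (Q i)" and "\<forall>i. posdef (R i)"
    and "Kopt \<in> stabK p A B"
    and "\<forall>K1\<in>stabK p A B. cost M x0 \<pi> p A B Q R Kopt \<le> cost M x0 \<pi> p A B Q R K1"
    and "K \<in> stabK p A B"
    and "0 < \<eta>"
    and "\<eta> \<le> 1 / (2 * max_norm (\<lambda>i. R i + transpose (B i) ** Eop p (PK p A B Q R K) i ** B i))"
  shows "cost M x0 \<pi> p A B Q R (\<lambda>i. K i - (2 * \<eta>) *\<^sub>R LK p A B Q R K i) - cost M x0 \<pi> p A B Q R Kopt
    \<le> ereal (1 - 2 * mu M x0 \<pi> * Lambda_min R / max_norm (XK M x0 \<pi> p A B Kopt) * \<eta>)
       * (cost M x0 \<pi> p A B Q R K - cost M x0 \<pi> p A B Q R Kopt)"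
proof -
  have pn: "\<forall>i j. p i j \<ge> 0" using assms(5) by (simp add: stochastic_def)
  note meas = assms(2) and int = assms(3)
  have pip: "\<And>i. 0 < \<pi> i" using assms(6) by blast
  have pin: "\<And>i. 0 \<le> \<pi> i" using pip less_imp_le by blast
  have Qpd: "\<And>j. posdef (Q j)" using assms(9) by blast
  have Rpd: "\<And>j. posdef (R j)" using assms(10) by blast
  have Qs: "\<And>j. transpose (Q j) = Q j" and Rs: "\<And>j. transpose (R j) = R j"
    using Qpd Rpd by (auto intro: posdef_sym)
  have Rp: "\<And>j y. 0 \<le> bf (R j) y y" using Rpd by (rule posdef_psd)
  have Qp: "\<And>j y. 0 \<le> bf (Q j) y y" using Qpd by (rule posdef_psd)
  have mssK: "mss p (Gam A B K)" using assms(13) by (simp add: stabK_def)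
  have mssS: "mss p (Gam A B Kopt)" using assms(11) by (simp add: stabK_def)
  define L where "L = LK p A B Q R K"
  define K2 where "K2 = (\<lambda>i. K i - (2 * \<eta>) *\<^sub>R L i)"
  define P where "P = PK p A B Q R K"
  define Ps where "Ps = PK p A B Q R Kopt"
  define P2 where "P2 = PK p A B Q R K2"
  define Z where "Z = (\<lambda>i. transpose (L i) ** mat 1 ** L i)"
  have Yb: "bf (Wf Q R K2 i + Lop p (Gam A B K2) P i - P i) x x \<le> - 2 * \<eta> * (norm (L i *v x))\<^sup>2" for i x
    unfolding K2_def L_def P_def by (rule Y2_bound[OF mssK pn Qs Rs assms(14) assms(15)])
  have Psol: "\<forall>i. P i = Wf Q R K i + Lop p (Gam A B K) P i" unfolding P_def by (rule PK_sol[OF mssK pn])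
  have Wp: "0 \<le> bf (Wf Q R K j) y y" for j y
  proof -
    have "bf (Q j) y y \<le> bf (Wf Q R K j) y y" by (rule Wf_ge[OF Rp])
    then show ?thesis using Qp[of j y] by linarith
  qed
  have Pp: "0 \<le> bf (P j) y y" for j y by (rule lyap_psd[OF mssK pn Psol Wp])
  have bZ: "bf (Z i) x x = (norm (L i *v x))\<^sup>2" for i x unfolding Z_def by (rule bf_Z)
  have Zp: "0 \<le> bf (Z i) x x" for i x unfolding bZ by simp
  have Yb0: "bf (Wf Q R K2 i + Lop p (Gam A B K2) P i - P i) x x \<le> 0" for i x
  proof -
    have "0 \<le> 2 * \<eta> * (norm (L i *v x))\<^sup>2" using assms(14) by simp
    then show ?thesis using Yb[of i x] by linarith
  qed
  have mss2: "mss p (Gam A B K2)" by (rule K2_stable[OF pn Qpd Rp Yb0 Pp])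
  have P2sol: "\<forall>i. P2 i = Wf Q R K2 i + Lop p (Gam A B K2) P2 i" unfolding P2_def by (rule PK_sol[OF mss2 pn])
  have desc: "IPX x0 M \<pi> P2 - IPX x0 M \<pi> P \<le> - (2 * \<eta>) * IPX x0 M \<pi> Z"
  proof (rule descent[OF meas int pin mss2 pn P2sol])
    show "\<And>i x. bf (Wf Q R K2 i + Lop p (Gam A B K2) P i - P i) x x \<le> - (2 * \<eta>) * bf (Z i) x x"
      using Yb by (simp add: bZ)
    show "0 \<le> 2 * \<eta>" using assms(14) by simp
    show "\<And>i x. 0 \<le> bf (Z i) x x" by (rule Zp)
  qed
  define FL where "FL = (\<Sum>i\<in>UNIV. \<Sum>r\<in>UNIV. (norm (L i $ r))\<^sup>2)"
  have FL0: "0 \<le> FL" unfolding FL_def by (intro sum_nonneg) simp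
  have low: "mu M x0 \<pi> * FL \<le> IPX x0 M \<pi> Z"
    unfolding FL_def Z_def by (rule IPX_Z_lower[OF assms(4) pip])
  define \<sigma> where "\<sigma> = Lambda_min R"
  have sp: "0 < \<sigma>" unfolding \<sigma>_def by (rule Lambda_min_pos[OF Rpd])
  define T where "T = (\<Sum>i\<in>UNIV. fr (XK M x0 \<pi> p A B Kopt i) (Z i))"
  have gd: "IPX x0 M \<pi> P - IPX x0 M \<pi> Ps \<le> T / \<sigma>"
    unfolding P_def Ps_def T_def Z_def L_def \<sigma>_def
    by (rule graddom[OF meas int pin mssK mssS pn Qpd Rpd])
  define Xn where "Xn = max_norm (XK M x0 \<pi> p A B Kopt)"
  have Xn0: "0 \<le> Xn" unfolding Xn_def using specnorm_nonneg max_norm_ge order_trans by blast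
  have TX: "T \<le> Xn * FL"
  proof -
    have "fr (XK M x0 \<pi> p A B Kopt i) (Z i) \<le> (\<Sum>r\<in>UNIV. Xn * (norm (L i $ r))\<^sup>2)" for i
    proof -
      have "fr (XK M x0 \<pi> p A B Kopt i) (Z i) = (\<Sum>r\<in>UNIV. bf (XK M x0 \<pi> p A B Kopt i) (L i $ r) (L i $ r))"
        unfolding Z_def by (rule fr_Z)
      also have "\<dots> \<le> (\<Sum>r\<in>UNIV. Xn * (norm (L i $ r))\<^sup>2)"
      proof (rule sum_mono)
        fix r
        have "bf (XK M x0 \<pi> p A B Kopt i) (L i $ r) (L i $ r) \<le> specnorm (XK M x0 \<pi> p A B Kopt i) * (norm (L i $ r))\<^sup>2"
          by (rule bf_le_specnorm)
        also have "\<dots> \<le> Xn * (norm (L i $ r))\<^sup>2"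
          unfolding Xn_def by (rule mult_right_mono[OF max_norm_ge]) simp
        finally show "bf (XK M x0 \<pi> p A B Kopt i) (L i $ r) (L i $ r) \<le> Xn * (norm (L i $ r))\<^sup>2" .
      qed
      finally show ?thesis .
    qed
    then have "T \<le> (\<Sum>i\<in>UNIV. \<Sum>r\<in>UNIV. Xn * (norm (L i $ r))\<^sup>2)"
      unfolding T_def by (rule sum_mono)
    also have "\<dots> = Xn * FL" unfolding FL_def by (simp add: sum_distrib_left)
    finally show ?thesis .
  qed
  have cK: "cost M x0 \<pi> p A B Q R K = ereal (IPX x0 M \<pi> P)"
    unfolding P_def by (rule cost_PK[OF meas int mssK pn])
  have cS: "cost M x0 \<pi> p A B Q R Kopt = ereal (IPX x0 M \<pi> Ps)"
    unfolding Ps_def by (rule cost_PK[OF meas int mssS pn])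
  have c2: "cost M x0 \<pi> p A B Q R K2 = ereal (IPX x0 M \<pi> P2)"
    unfolding P2_def by (rule cost_PK[OF meas int mss2 pn])
  have opt: "IPX x0 M \<pi> Ps \<le> IPX x0 M \<pi> P"
    using assms(12) assms(13) cK cS by force
  define c where "c = IPX x0 M \<pi> P"
  define cs where "cs = IPX x0 M \<pi> Ps"
  define cc where "cc = IPX x0 M \<pi> P2"
  define m where "m = mu M x0 \<pi>"
  have m0: "0 \<le> m"
  proof -
    have a: "0 < Min (range \<pi>)" by (subst Min_gr_iff) (auto intro: pip)
    show ?thesis unfolding m_def mu_def by (rule mult_nonneg_nonneg[OF less_imp_le[OF a] sigma_min_nonneg])
  qed
  have d1: "cc - c \<le> - 2 * \<eta> * (m * FL)"
  proof -
    have "- (2 * \<eta>) * IPX x0 M \<pi> Z \<le> - (2 * \<eta>) * (m * FL)"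
      using low assms(14) unfolding m_def by simp
    then show ?thesis using desc unfolding cc_def c_def by simp
  qed
  have g1: "c - cs \<le> Xn * FL / \<sigma>"
  proof -
    have "T / \<sigma> \<le> Xn * FL / \<sigma>" using TX sp by (simp add: divide_right_mono)
    then show ?thesis using gd unfolding c_def cs_def by simp
  qed
  have main: "cc - cs \<le> (1 - 2 * m * \<sigma> / Xn * \<eta>) * (c - cs)"
  proof (cases "Xn = 0")
    case True
    have "0 \<le> 2 * \<eta> * (m * FL)" using assms(14) m0 FL0 by simp
    then have "cc \<le> c" using d1 by linarith
    then show ?thesis using True by simp
  next
    case False
    then have Xp: "0 < Xn" using Xn0 by simp
    have "\<sigma> * (c - cs) / Xn \<le> FL"
      using g1 Xp sp by (simp add: field_simps)
    then have "2 * \<eta> * m * (\<sigma> * (c - cs) / Xn) \<le> 2 * \<eta> * m * FL"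
      by (rule mult_left_mono) (use assms(14) m0 in simp)
    moreover have "(1 - 2 * m * \<sigma> / Xn * \<eta>) * (c - cs) = (c - cs) - 2 * \<eta> * m * (\<sigma> * (c - cs) / Xn)"
      by (simp add: field_simps)
    ultimately show ?thesis using d1 by (simp add: algebra_simps)
  qed
  have goalK2: "(\<lambda>i. K i - (2 * \<eta>) *\<^sub>R LK p A B Q R K i) = K2" unfolding K2_def L_def ..
  show ?thesis
    unfolding goalK2 cK cS c2
    using main unfolding c_def cs_def cc_def m_def \<sigma>_def Xn_def by simp
qed

end
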